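(* Let $G,H$ be abelian groups. (a) If there exists $n\in\mathbb{Z}\setminus\{0\}$ with $G\xrightarrow{n}H$, then $\mathrm{rank}_0(G)\le\mathrm{rank}_0(H)$. (b) If there exist $m,n\in\mathbb{Z}\setminus\{0\}$ with $\gcd(m,n)=1$, $G\xrightarrow{m}H$ and $G\xrightarrow{n}H$, then $G$ is a direct summand of $H\oplus H$. In particular, if $G\xrightarrow{*}H$ then $G$ is a direct summand of $H\oplus H$. (c) If there exist relatively prime nonzero integers $n,r$ with $G\xrightarrow{n}H$ and $rG=0$, then $G$ is a direct summand of $H$. (d) If one of $G,H$ is finitely generated, $G\xrightarrow{*}H$ and $H\xrightarrow{*}G$, then $G\cong H$.
   Context: For $n\in\mathbb{Z}\setminus\{0\}$, "$G\xrightarrow{n}H$" means: there exist group homomorphisms $\phi:G\to H$ and $\psi:H\to G$ such that $\psi\circ\phi$ is multiplication by $n$ on $G$. "$G\xrightarrow{*}H$" means: for each $r\in\mathbb{Z}\setminus\{0\}$ there exists $n\in\mathbb{Z}\setminus\{0\}$ with $\gcd(n,r)=1$ and $G\xrightarrow{n}H$. $\mathrm{rank}_0(G)=\dim_{\mathbb{Q}}(\mathbb{Q}\otimes_{\mathbb{Z}}G)$. *)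

theory Defs
  imports "HOL-Algebra.Algebra"
begin

(* Abelian groups are HOL-Algebra commutative groups (written multiplicatively);
   "multiplication by n" on G is  x \<mapsto> x [^] n  with n :: int. *)

definition mult_arrow :: "int \<Rightarrow> ('a, 'c) monoid_scheme \<Rightarrow> ('b, 'd) monoid_scheme \<Rightarrow> bool" where
  "mult_arrow n G H \<longleftrightarrow> (\<exists>\<phi> \<psi>. \<phi> \<in> hom G H \<and> \<psi> \<in> hom H G \<and>
      (\<forall>x \<in> carrier G. \<psi> (\<phi> x) = x [^]\<^bsub>G\<^esub> n))"

definition star_arrow :: "('a, 'c) monoid_scheme \<Rightarrow> ('b, 'd) monoid_scheme \<Rightarrow> bool" where
  "star_arrow G H \<longleftrightarrow> (\<forall>r::int. r \<noteq> 0 \<longrightarrow>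
      (\<exists>n::int. n \<noteq> 0 \<and> gcd n r = 1 \<and> mult_arrow n G H))"

definition Z_independent :: "('a, 'c) monoid_scheme \<Rightarrow> 'a set \<Rightarrow> bool" where
  "Z_independent G A \<longleftrightarrow> A \<subseteq> carrier G \<and>
     (\<forall>S c. finite S \<and> S \<subseteq> A \<and> finprod G (\<lambda>x. x [^]\<^bsub>G\<^esub> (c x :: int)) S = \<one>\<^bsub>G\<^esub>
        \<longrightarrow> (\<forall>x \<in> S. c x = 0))"

(* rank_0(G) \<le> rank_0(H), as cardinals: rank_0 is the cardinality of a maximal
   Z-independent subset (= dim_Q (Q \<otimes> G)); the inequality says every independent
   subset of G injects into some independent subset of H. *)
definition rank0_le :: "('a, 'c) monoid_scheme \<Rightarrow> ('b, 'd) monoid_scheme \<Rightarrow> bool" where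
  "rank0_le G H \<longleftrightarrow> (\<forall>A. Z_independent G A \<longrightarrow>
      (\<exists>B f. Z_independent H B \<and> inj_on f A \<and> f ` A \<subseteq> B))"

definition direct_summand :: "('a, 'c) monoid_scheme \<Rightarrow> ('b, 'd) monoid_scheme \<Rightarrow> bool" where
  "direct_summand G K \<longleftrightarrow> (\<exists>A B. subgroup A K \<and> subgroup B K \<and> A \<inter> B = {\<one>\<^bsub>K\<^esub>} \<and>
      A <#>\<^bsub>K\<^esub> B = carrier K \<and> G \<cong> subgroup_generated K A)"

definition fin_gen :: "('a, 'c) monoid_scheme \<Rightarrow> bool" where
  "fin_gen G \<longleftrightarrow> (\<exists>S. finite S \<and> S \<subseteq> carrier G \<and> generate G S = carrier G)"

end

theory Submission
  imports Defs
begin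

lemma finprod_hom:
  assumes "group G" "group H" "comm_group G" "comm_group H" "h \<in> hom G H" "finite A" "f \<in> A \<rightarrow> carrier G"
  shows "h (finprod G f A) = finprod H (\<lambda>i. h (f i)) A"
  using assms(6,7)
proof (induction A rule: finite_induct)
  case empty
  interpret G: comm_group G by fact
  interpret H: comm_group H by fact
  interpret hh: group_hom G H h using assms by (simp add: group_hom_axioms_def group_hom_def)
  show ?case by simp
next
  case (insert x F)
  interpret G: comm_group G by fact
  interpret H: comm_group H by fact
  interpret hh: group_hom G H h using assms by (simp add: group_hom_axioms_def group_hom_def)
  have fx: "f x \<in> carrier G" and fF: "f \<in> F \<rightarrow> carrier G" using insert by auto
  have "h (finprod G f (insert x F)) = h (f x \<otimes>\<^bsub>G\<^esub> finprod G f F)"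
    using insert fx fF by (simp add: G.finprod_insert)
  also have "\<dots> = h (f x) \<otimes>\<^bsub>H\<^esub> h (finprod G f F)" using fx fF by simp
  also have "\<dots> = finprod H (\<lambda>i. h (f i)) (insert x F)"
    using insert fx fF by (subst H.finprod_insert) (auto simp: Pi_def)
  finally show ?case .
qed

lemma (in comm_group) finprod_int_pow:
  assumes "finite A" "f \<in> A \<rightarrow> carrier G"
  shows "(finprod G f A) [^] (n::int) = finprod G (\<lambda>i. f i [^] n) A"
  using assms
proof (induction A rule: finite_induct)
  case empty then show ?case by simp
next
  case (insert x F)
  then have fx: "f x \<in> carrier G" and fF: "f \<in> F \<rightarrow> carrier G" by auto
  then show ?case using insert by (simp add: int_pow_distrib Pi_def)
qed

lemma (in comm_group) finprod_pow_mult: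
  assumes "finite A" "f \<in> A \<rightarrow> carrier G"
  shows "finprod G (\<lambda>i. f i [^] (a i::int)) A \<otimes> finprod G (\<lambda>i. f i [^] (b i)) A
         = finprod G (\<lambda>i. f i [^] (a i + b i)) A"
proof -
  have "finprod G (\<lambda>i. f i [^] (a i + b i)) A = finprod G (\<lambda>i. f i [^] (a i) \<otimes> f i [^] (b i)) A"
    using assms by (intro finprod_cong) (auto simp: int_pow_mult Pi_def)
  also have "\<dots> = finprod G (\<lambda>i. f i [^] (a i::int)) A \<otimes> finprod G (\<lambda>i. f i [^] (b i)) A"
    using assms by (intro finprod_multf) (auto simp: Pi_def)
  finally show ?thesis by simp
qed

lemma hom_pow_comm:
  assumes "group G" "comm_group H" "f \<in> hom G H"
  shows "(\<lambda>x. f x [^]\<^bsub>H\<^esub> (a::int)) \<in> hom G H"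
proof -
  interpret H: comm_group H by fact
  show ?thesis using assms(3) unfolding hom_def
    by (auto simp: H.int_pow_distrib Pi_def)
qed

lemma retract_direct_summand:
  assumes G: "comm_group G" and K: "comm_group K" and P: "P \<in> hom G K" and Q: "Q \<in> hom K G"
    and PQ: "\<And>x. x \<in> carrier G \<Longrightarrow> Q (P x) = x"
  shows "direct_summand G K"
proof -
  interpret G: comm_group G by fact
  interpret K: comm_group K by fact
  interpret hP: group_hom G K P using P by (simp add: group_hom_axioms_def group_hom_def G.is_group K.is_group)
  interpret hQ: group_hom K G Q using Q by (simp add: group_hom_axioms_def group_hom_def G.is_group K.is_group)
  define A where "A = P ` carrier G"
  define B where "B = kernel K G Q"
  have sA: "subgroup A K" unfolding A_def by (rule hP.img_is_subgroup)
  have sB: "subgroup B K" unfolding B_def by (rule hQ.subgroup_kernel)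
  have AB: "A \<inter> B = {\<one>\<^bsub>K\<^esub>}"
  proof
    show "A \<inter> B \<subseteq> {\<one>\<^bsub>K\<^esub>}"
    proof
      fix y assume "y \<in> A \<inter> B"
      then obtain x where x: "x \<in> carrier G" "y = P x" "Q y = \<one>\<^bsub>G\<^esub>"
        unfolding A_def B_def kernel_def by auto
      then have "x = \<one>\<^bsub>G\<^esub>" using PQ by auto
      then show "y \<in> {\<one>\<^bsub>K\<^esub>}" using x by simp
    qed
    show "{\<one>\<^bsub>K\<^esub>} \<subseteq> A \<inter> B"
      using subgroup.one_closed[OF sA] subgroup.one_closed[OF sB] by auto
  qed
  have ABc: "A <#>\<^bsub>K\<^esub> B = carrier K"
  proof
    show "A <#>\<^bsub>K\<^esub> B \<subseteq> carrier K"
      using sA sB by (simp add: K.set_mult_closed subgroup.subset)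
    show "carrier K \<subseteq> A <#>\<^bsub>K\<^esub> B"
    proof
      fix k assume k: "k \<in> carrier K"
      define a where "a = P (Q k)"
      have a: "a \<in> A" "a \<in> carrier K" using k unfolding a_def A_def by auto
      have b: "inv\<^bsub>K\<^esub> a \<otimes>\<^bsub>K\<^esub> k \<in> B"
        unfolding B_def kernel_def using k a
        by (simp add: a_def PQ hQ.hom_inv G.l_inv)
      have "k = a \<otimes>\<^bsub>K\<^esub> (inv\<^bsub>K\<^esub> a \<otimes>\<^bsub>K\<^esub> k)"
        using a k by (simp add: K.m_assoc[symmetric])
      then show "k \<in> A <#>\<^bsub>K\<^esub> B" using a b unfolding set_mult_def by blast
    qed
  qed
  have "P \<in> iso G (subgroup_generated K A)"
  proof -
    have c: "carrier (subgroup_generated K A) = A"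
      using sA by (simp add: subgroup.carrier_subgroup_generated_subgroup)
    have "P \<in> hom G (subgroup_generated K A)"
      using P c unfolding hom_def A_def by auto
    moreover have "bij_betw P (carrier G) A"
      unfolding bij_betw_def A_def by (metis PQ inj_on_inverseI)
    ultimately show ?thesis unfolding iso_def using c by simp
  qed
  then have "G \<cong> subgroup_generated K A" by (rule is_isoI)
  then show ?thesis unfolding direct_summand_def using sA sB AB ABc by blast
qed

lemma Z_indepD:
  assumes "Z_independent G A" "finite S" "S \<subseteq> A"
    "finprod G (\<lambda>x. x [^]\<^bsub>G\<^esub> (c x :: int)) S = \<one>\<^bsub>G\<^esub>" "x \<in> S"
  shows "c x = 0"
  using assms unfolding Z_independent_def by blast


lemma partA:
  assumes G: "comm_group G" and H: "comm_group H" and n: "n \<noteq> 0" and ma: "mult_arrow n G H"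
  shows "rank0_le G H"
proof -
  interpret G: comm_group G by fact
  interpret H: comm_group H by fact
  obtain \<phi> \<psi> where \<phi>: "\<phi> \<in> hom G H" and \<psi>: "\<psi> \<in> hom H G"
    and pp: "\<And>x. x \<in> carrier G \<Longrightarrow> \<psi> (\<phi> x) = x [^]\<^bsub>G\<^esub> n"
    using ma unfolding mult_arrow_def by blast
  interpret h\<phi>: group_hom G H \<phi> using \<phi> by (simp add: group_hom_axioms_def group_hom_def G.is_group H.is_group)
  interpret h\<psi>: group_hom H G \<psi> using \<psi> by (simp add: group_hom_axioms_def group_hom_def G.is_group H.is_group)
  show ?thesis unfolding rank0_le_def
  proof (intro allI impI)
    fix A assume Ai: "Z_independent G A"
    then have AG: "A \<subseteq> carrier G" unfolding Z_independent_def by simp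
    have inj: "inj_on \<phi> A"
    proof (rule inj_onI, rule ccontr)
      fix a b assume ab: "a \<in> A" "b \<in> A" "\<phi> a = \<phi> b" "a \<noteq> b"
      define c where "c = (\<lambda>x. if x = a then n else - n)"
      have abG: "a \<in> carrier G" "b \<in> carrier G" using ab AG by auto
      have "a [^]\<^bsub>G\<^esub> n = b [^]\<^bsub>G\<^esub> n" using pp abG ab(3) by metis
      have ca: "c a = n" and cb: "c b = - n" using ab(4) by (auto simp: c_def)
      have "finprod G (\<lambda>x. x [^]\<^bsub>G\<^esub> c x) {a, b} = a [^]\<^bsub>G\<^esub> c a \<otimes>\<^bsub>G\<^esub> b [^]\<^bsub>G\<^esub> c b"
        using ab abG by (simp add: G.finprod_insert)
      also have "\<dots> = \<one>\<^bsub>G\<^esub>" unfolding ca cb using abG \<open>a [^]\<^bsub>G\<^esub> n = b [^]\<^bsub>G\<^esub> n\<close>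
        by (simp add: G.int_pow_neg)
      finally have fp: "finprod G (\<lambda>x. x [^]\<^bsub>G\<^esub> c x) {a, b} = \<one>\<^bsub>G\<^esub>" .
      have "c a = 0" by (rule Z_indepD[OF Ai _ _ fp, of a]) (use ab in auto)
      then show False using n ca by simp
    qed
    have Bi: "Z_independent H (\<phi> ` A)"
      unfolding Z_independent_def
    proof (intro conjI allI impI)
      show "\<phi> ` A \<subseteq> carrier H" using AG by auto
      fix S c assume Sc: "finite S \<and> S \<subseteq> \<phi> ` A \<and> finprod H (\<lambda>x. x [^]\<^bsub>H\<^esub> (c x::int)) S = \<one>\<^bsub>H\<^esub>"
      then obtain C where C: "C \<subseteq> A" "finite C" "S = \<phi> ` C"
        by (meson finite_subset_image)
      have injC: "inj_on \<phi> C" using inj C inj_on_subset by blast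
      have CG: "C \<subseteq> carrier G" using C AG by auto
      have "finprod H (\<lambda>y. y [^]\<^bsub>H\<^esub> c y) S = finprod H (\<lambda>x. \<phi> x [^]\<^bsub>H\<^esub> c (\<phi> x)) C"
        unfolding C(3) using injC CG by (subst H.finprod_reindex) (auto simp: Pi_def)
      then have e1: "finprod H (\<lambda>x. \<phi> x [^]\<^bsub>H\<^esub> c (\<phi> x)) C = \<one>\<^bsub>H\<^esub>" using Sc by simp
      have "\<psi> (finprod H (\<lambda>x. \<phi> x [^]\<^bsub>H\<^esub> c (\<phi> x)) C)
            = finprod G (\<lambda>x. \<psi> (\<phi> x [^]\<^bsub>H\<^esub> c (\<phi> x))) C"
        using CG C(2) by (intro finprod_hom[OF H.is_group G.is_group H G \<psi>]) auto
      also have "\<dots> = finprod G (\<lambda>x. x [^]\<^bsub>G\<^esub> (n * c (\<phi> x))) C"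
      proof (rule G.finprod_cong')
        fix x assume "x \<in> C"
        then have x: "x \<in> carrier G" using CG by auto
        then show "\<psi> (\<phi> x [^]\<^bsub>H\<^esub> c (\<phi> x)) = x [^]\<^bsub>G\<^esub> (n * c (\<phi> x))"
          by (simp add: h\<psi>.hom_int_pow pp G.int_pow_pow)
      qed (use CG in auto)
      finally have fe: "finprod G (\<lambda>x. x [^]\<^bsub>G\<^esub> (n * c (\<phi> x))) C = \<psi> (finprod H (\<lambda>x. \<phi> x [^]\<^bsub>H\<^esub> c (\<phi> x)) C)" by (rule sym)
      have "finprod G (\<lambda>x. x [^]\<^bsub>G\<^esub> (n * c (\<phi> x))) C = \<one>\<^bsub>G\<^esub>"
        unfolding fe e1 by (rule h\<psi>.hom_one)
      then have "\<forall>x\<in>C. n * c (\<phi> x) = 0"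
        using Z_indepD[OF Ai C(2) C(1), of "\<lambda>x. n * c (\<phi> x)"] by blast
      then show "\<forall>y\<in>S. c y = 0" using C(3) n by auto
    qed
    show "\<exists>B f. Z_independent H B \<and> inj_on f A \<and> f ` A \<subseteq> B"
      using Bi inj by blast
  qed
qed


lemma int_dep:
  fixes v :: "'b \<Rightarrow> 'j \<Rightarrow> int"
  assumes "finite J"
  shows "finite B \<Longrightarrow> card J < card B \<Longrightarrow> \<exists>c. (\<exists>b\<in>B. c b \<noteq> 0) \<and> (\<forall>j\<in>J. (\<Sum>b\<in>B. c b * v b j) = 0)"
  using assms
proof (induction J arbitrary: B v rule: finite_induct)
  case empty
  then have "B \<noteq> {}" by auto
  then show ?case by (intro exI[of _ "\<lambda>_. 1"]) auto
next
  case (insert j J B v)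
  show ?case
  proof (cases "\<forall>b\<in>B. v b j = 0")
    case True
    have "card J < card B" using insert by simp
    then obtain c where c: "\<exists>b\<in>B. c b \<noteq> 0" "\<forall>t\<in>J. (\<Sum>b\<in>B. c b * v b t) = 0"
      using insert.IH[OF insert.prems(1)] by blast
    have "(\<Sum>b\<in>B. c b * v b j) = 0" using True by simp
    then show ?thesis using c by auto
  next
    case False
    then obtain b0 where b0: "b0 \<in> B" "v b0 j \<noteq> 0" by blast
    define \<alpha> where "\<alpha> = v b0 j"
    define B' where "B' = B - {b0}"
    define v' where "v' = (\<lambda>b t. \<alpha> * v b t - v b j * v b0 t)"
    have fB': "finite B'" using insert.prems unfolding B'_def by simp
    have cB': "card J < card B'" using insert.prems insert.hyps b0 unfolding B'_def by simp
    obtain c' where c': "\<exists>b\<in>B'. c' b \<noteq> 0" "\<forall>t\<in>J. (\<Sum>b\<in>B'. c' b * v' b t) = 0"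
      using insert.IH[OF fB' cB', of v'] by blast
    define c where "c = (\<lambda>b. if b = b0 then - (\<Sum>b\<in>B'. c' b * v b j) else \<alpha> * c' b)"
    have sumB: "(\<Sum>b\<in>B. c b * v b t) = c b0 * v b0 t + (\<Sum>b\<in>B'. \<alpha> * (c' b * v b t))" for t
    proof -
      have "(\<Sum>b\<in>B. c b * v b t) = c b0 * v b0 t + (\<Sum>b\<in>B'. c b * v b t)"
        unfolding B'_def using b0 insert.prems(1) by (simp add: sum.remove)
      also have "(\<Sum>b\<in>B'. c b * v b t) = (\<Sum>b\<in>B'. \<alpha> * (c' b * v b t))"
        unfolding B'_def c_def by (intro sum.cong) auto
      finally show ?thesis .
    qed
    have "(\<Sum>b\<in>B. c b * v b t) = 0" if t: "t \<in> insert j J" for t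
    proof (cases "t = j")
      case True
      then show ?thesis unfolding sumB by (simp add: c_def \<alpha>_def sum_distrib_left[symmetric])
    next
      case False
      then have tJ: "t \<in> J" using t by simp
      have "(\<Sum>b\<in>B. c b * v b t) = - (\<Sum>b\<in>B'. c' b * v b j) * v b0 t + \<alpha> * (\<Sum>b\<in>B'. c' b * v b t)"
        unfolding sumB by (simp add: c_def sum_distrib_left)
      also have "\<dots> = (\<Sum>b\<in>B'. c' b * v' b t)"
        unfolding v'_def by (simp add: sum_distrib_left sum_distrib_right sum_subtractf algebra_simps)
      also have "\<dots> = 0" using c'(2) tJ by simp
      finally show ?thesis .
    qed
    moreover have "\<exists>b\<in>B. c b \<noteq> 0"
    proof -
      obtain b1 where "b1 \<in> B'" "c' b1 \<noteq> 0" using c'(1) by blast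
      then show ?thesis unfolding c_def B'_def using b0 \<alpha>_def by (intro bexI[of _ b1]) auto
    qed
    ultimately show ?thesis by blast
  qed
qed


definition lc :: "('a, 'c) monoid_scheme \<Rightarrow> 'i set \<Rightarrow> ('i \<Rightarrow> 'a) \<Rightarrow> ('i \<Rightarrow> int) \<Rightarrow> 'a" where
  "lc G I z c = finprod G (\<lambda>i. z i [^]\<^bsub>G\<^esub> c i) I"

context comm_group
begin

lemma lc_closed [simp]: "z \<in> I \<rightarrow> carrier G \<Longrightarrow> lc G I z c \<in> carrier G"
  unfolding lc_def by (intro finprod_closed) (auto simp: Pi_def)

lemma lc_add:
  "finite I \<Longrightarrow> z \<in> I \<rightarrow> carrier G \<Longrightarrow> lc G I z a \<otimes> lc G I z b = lc G I z (\<lambda>i. a i + b i)"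
  unfolding lc_def by (rule finprod_pow_mult)

lemma lc_zero [simp]: "lc G I z (\<lambda>_. 0) = \<one>"
  unfolding lc_def by simp

lemma lc_pow:
  "finite I \<Longrightarrow> z \<in> I \<rightarrow> carrier G \<Longrightarrow> (lc G I z c) [^] (m::int) = lc G I z (\<lambda>i. m * c i)"
  unfolding lc_def
  by (subst finprod_int_pow) (auto simp: Pi_def int_pow_pow mult.commute intro!: finprod_cong')

lemma lc_inv:
  assumes "finite I" "z \<in> I \<rightarrow> carrier G"
  shows "inv (lc G I z c) = lc G I z (\<lambda>i. - c i)"
proof -
  have "lc G I z c \<otimes> lc G I z (\<lambda>i. - c i) = \<one>"
    using assms by (simp add: lc_add)
  then show ?thesis using assms by (simp add: inv_equality m_comm)
qed

lemma lc_cong: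
  "(\<And>i. i \<in> I \<Longrightarrow> z i [^] c i = z' i [^] c' i) \<Longrightarrow> z \<in> I \<rightarrow> carrier G \<Longrightarrow> lc G I z c = lc G I z' c'"
  unfolding lc_def
proof (intro finprod_cong')
  assume h: "\<And>i. i \<in> I \<Longrightarrow> z i [^] c i = z' i [^] c' i" "z \<in> I \<rightarrow> carrier G"
  then show "(\<lambda>i. z' i [^] c' i) \<in> I \<rightarrow> carrier G"
    by (metis (no_types, lifting) Pi_iff int_pow_closed)
  show "\<And>i. i \<in> I \<Longrightarrow> z i [^] c i = z' i [^] c' i" using h by blast
qed simp

lemma finprod_in_subgroup:
  assumes "subgroup K G" "f \<in> A \<rightarrow> K"
  shows "finprod G f A \<in> K"
proof (cases "finite A")
  case True
  then show ?thesis using assms(2)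
  proof (induction A rule: finite_induct)
    case empty then show ?case using assms(1) by (simp add: subgroup.one_closed)
  next
    case (insert x F)
    have "f \<in> F \<rightarrow> carrier G" "f x \<in> carrier G"
      using insert subgroup.subset[OF assms(1)] by auto
    then show ?case using insert assms(1) by (simp add: subgroup.m_closed)
  qed
next
  case False then show ?thesis using assms(1) by (simp add: subgroup.one_closed)
qed

lemma lc_in_subgroup:
  "subgroup K G \<Longrightarrow> z ` I \<subseteq> K \<Longrightarrow> lc G I z c \<in> K"
  unfolding lc_def
  by (rule finprod_in_subgroup) (auto intro: subgroup_int_pow_closed)

lemma gen_lc:
  assumes fin: "finite I" and z: "z \<in> I \<rightarrow> carrier G"
  shows "generate G (z ` I) = range (lc G I z)"
proof
  show "range (lc G I z) \<subseteq> generate G (z ` I)"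
  proof
    fix y assume "y \<in> range (lc G I z)"
    then obtain c where "y = lc G I z c" by auto
    moreover have "z ` I \<subseteq> generate G (z ` I)" using generate.incl[of _ "z ` I" G] by blast
    moreover have "subgroup (generate G (z ` I)) G" using z by (intro generate_is_subgroup) auto
    ultimately show "y \<in> generate G (z ` I)" using lc_in_subgroup by blast
  qed
  have sub: "subgroup (range (lc G I z)) G"
  proof (rule subgroupI)
    show "range (lc G I z) \<subseteq> carrier G" using z by auto
    show "range (lc G I z) \<noteq> {}" by auto
    fix a b assume "a \<in> range (lc G I z)" "b \<in> range (lc G I z)"
    then obtain c d where "a = lc G I z c" "b = lc G I z d" by auto
    then show "inv a \<in> range (lc G I z)" "a \<otimes> b \<in> range (lc G I z)"
      using fin z by (auto simp: lc_inv lc_add)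
  qed
  have "z ` I \<subseteq> range (lc G I z)"
  proof
    fix y assume "y \<in> z ` I"
    then obtain j where j: "j \<in> I" "y = z j" by auto
    have "lc G I z (\<lambda>i. if i = j then 1 else 0) = finprod G (\<lambda>i. if j = i then z i else \<one>) I"
      unfolding lc_def using z by (intro finprod_cong') (auto simp: Pi_def)
    also have "\<dots> = z j" using finprod_singleton[OF j(1) fin z] .
    finally show "y \<in> range (lc G I z)" using j by (metis rangeI)
  qed
  then show "generate G (z ` I) \<subseteq> range (lc G I z)"
    using generate_subgroup_incl[OF _ sub] by blast
qed

lemma lc_Suc:
  assumes "x \<in> carrier G" "w \<in> {..<k} \<rightarrow> carrier G"
  shows "lc G {..<Suc k} (case_nat x w) c = x [^] c 0 \<otimes> lc G {..<k} w (\<lambda>i. c (Suc i))"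
proof -
  have "lc G {..<Suc k} (case_nat x w) c = finprod G (\<lambda>i. case_nat x w i [^] c i) (insert 0 (Suc ` {..<k}))"
    unfolding lc_def lessThan_Suc_eq_insert_0 ..
  also have "\<dots> = x [^] c 0 \<otimes> finprod G (\<lambda>i. case_nat x w i [^] c i) (Suc ` {..<k})"
    using assms by (subst finprod_insert) (auto simp: Pi_def)
  also have "finprod G (\<lambda>i. case_nat x w i [^] c i) (Suc ` {..<k}) = lc G {..<k} w (\<lambda>i. c (Suc i))"
    unfolding lc_def using assms by (subst finprod_reindex) (auto simp: Pi_def)
  finally show ?thesis .
qed

end


definition gens :: "('a, 'c) monoid_scheme \<Rightarrow> nat \<Rightarrow> (nat \<Rightarrow> 'a) \<Rightarrow> bool" where
  "gens G k z \<longleftrightarrow> z \<in> {..<k} \<rightarrow> carrier G \<and> generate G (z ` {..<k}) = carrier G"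

definition indep_cyc :: "('a, 'c) monoid_scheme \<Rightarrow> nat \<Rightarrow> (nat \<Rightarrow> 'a) \<Rightarrow> bool" where
  "indep_cyc G k z \<longleftrightarrow> (\<forall>c. lc G {..<k} z c = \<one>\<^bsub>G\<^esub> \<longrightarrow> (\<forall>i<k. z i [^]\<^bsub>G\<^esub> c i = \<one>\<^bsub>G\<^esub>))"

context comm_group
begin

definition gens2 :: "nat \<Rightarrow> 'a \<Rightarrow> (nat \<Rightarrow> 'a) \<Rightarrow> bool" where
  "gens2 k x w \<longleftrightarrow> x \<in> carrier G \<and> w \<in> {..<k} \<rightarrow> carrier G \<and>
     (\<forall>g\<in>carrier G. \<exists>m d. g = x [^] (m::int) \<otimes> lc G {..<k} w d)"

definition rel :: "nat \<Rightarrow> 'a \<Rightarrow> (nat \<Rightarrow> 'a) \<Rightarrow> int \<Rightarrow> (nat \<Rightarrow> int) \<Rightarrow> bool" where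
  "rel k x w m d \<longleftrightarrow> x [^] m \<otimes> lc G {..<k} w d = \<one>"

lemma case_nat_Pi:
  "x \<in> carrier G \<Longrightarrow> w \<in> {..<k} \<rightarrow> carrier G \<Longrightarrow> case_nat x w \<in> {..<Suc k} \<rightarrow> carrier G"
  by (auto simp: Pi_def split: nat.split)

lemma gens_iff_gens2:
  assumes x: "x \<in> carrier G" and w: "w \<in> {..<k} \<rightarrow> carrier G"
  shows "gens G (Suc k) (case_nat x w) \<longleftrightarrow> gens2 k x w"
proof -
  have P: "case_nat x w \<in> {..<Suc k} \<rightarrow> carrier G" using case_nat_Pi[OF x w] .
  have gen: "generate G (case_nat x w ` {..<Suc k}) = range (lc G {..<Suc k} (case_nat x w))"
    using gen_lc[OF _ P] by simp
  have r: "range (lc G {..<Suc k} (case_nat x w)) = {x [^] (m::int) \<otimes> lc G {..<k} w d | m d. True}"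
  proof
    show "range (lc G {..<Suc k} (case_nat x w)) \<subseteq> {x [^] (m::int) \<otimes> lc G {..<k} w d | m d. True}"
    proof
      fix g assume "g \<in> range (lc G {..<Suc k} (case_nat x w))"
      then obtain c where "g = lc G {..<Suc k} (case_nat x w) c" by auto
      then have "g = x [^] c 0 \<otimes> lc G {..<k} w (\<lambda>i. c (Suc i))" using lc_Suc[OF x w] by simp
      then show "g \<in> {x [^] (m::int) \<otimes> lc G {..<k} w d | m d. True}" by blast
    qed
    show "{x [^] (m::int) \<otimes> lc G {..<k} w d | m d. True} \<subseteq> range (lc G {..<Suc k} (case_nat x w))"
    proof
      fix g assume "g \<in> {x [^] (m::int) \<otimes> lc G {..<k} w d | m d. True}"
      then obtain m :: int and d where g: "g = x [^] m \<otimes> lc G {..<k} w d" by auto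
      have "lc G {..<Suc k} (case_nat x w) (case_nat m d) = g"
        using lc_Suc[OF x w, of "case_nat m d"] g by simp
      then show "g \<in> range (lc G {..<Suc k} (case_nat x w))" by (metis rangeI)
    qed
  qed
  have sub: "{x [^] (m::int) \<otimes> lc G {..<k} w d | m d. True} \<subseteq> carrier G" using x w by auto
  show ?thesis unfolding gens_def gens2_def gen r using P x w sub by blast
qed

lemma shift:
  fixes k :: nat
  assumes x: "x \<in> carrier G" and w: "w \<in> {..<k} \<rightarrow> carrier G"
  shows "(x \<otimes> lc G {..<k} w q) [^] (a::int) \<otimes> lc G {..<k} w (\<lambda>i. b i - a * q i) = x [^] a \<otimes> lc G {..<k} w b"
proof -
  have "(x \<otimes> lc G {..<k} w q) [^] a = x [^] a \<otimes> lc G {..<k} w (\<lambda>i. a * q i)"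
    using x w by (simp add: int_pow_distrib lc_pow)
  then have "(x \<otimes> lc G {..<k} w q) [^] a \<otimes> lc G {..<k} w (\<lambda>i. b i - a * q i)
      = x [^] a \<otimes> (lc G {..<k} w (\<lambda>i. a * q i) \<otimes> lc G {..<k} w (\<lambda>i. b i - a * q i))"
    using x w by (simp add: m_assoc)
  also have "lc G {..<k} w (\<lambda>i. a * q i) \<otimes> lc G {..<k} w (\<lambda>i. b i - a * q i) = lc G {..<k} w b"
    using w by (subst lc_add) auto
  finally show ?thesis .
qed

lemma gens2_shift:
  assumes "gens2 k x w"
  shows "gens2 k (x \<otimes> lc G {..<k} w q) w"
proof -
  have x: "x \<in> carrier G" and w: "w \<in> {..<k} \<rightarrow> carrier G" using assms unfolding gens2_def by auto
  have "\<exists>m d. g = (x \<otimes> lc G {..<k} w q) [^] (m::int) \<otimes> lc G {..<k} w d" if g: "g \<in> carrier G" for g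
  proof -
    obtain m d where "g = x [^] (m::int) \<otimes> lc G {..<k} w d" using assms g unfolding gens2_def by blast
    then have "g = (x \<otimes> lc G {..<k} w q) [^] m \<otimes> lc G {..<k} w (\<lambda>i. d i - m * q i)"
      using shift[OF x w] by simp
    then show ?thesis by blast
  qed
  then show ?thesis unfolding gens2_def using x w by auto
qed

lemma lc_split:
  assumes "finite I" "i \<in> I" "z \<in> I \<rightarrow> carrier G"
  shows "lc G I z c = z i [^] c i \<otimes> lc G (I - {i}) z c"
proof -
  have "I = insert i (I - {i})" using assms by auto
  then have "lc G I z c = lc G (insert i (I - {i})) z c" by simp
  also have "\<dots> = z i [^] c i \<otimes> lc G (I - {i}) z c"
    unfolding lc_def using assms by (subst finprod_insert) (auto simp: Pi_def)
  finally show ?thesis .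
qed

lemma swap_id:
  fixes k :: nat
  assumes x: "x \<in> carrier G" and w: "w \<in> {..<k} \<rightarrow> carrier G" and i: "i < k"
  shows "x [^] m \<otimes> lc G {..<k} w d = w i [^] d i \<otimes> lc G {..<k} (w(i := x)) (d(i := m))"
proof -
  have w': "w(i := x) \<in> {..<k} \<rightarrow> carrier G" using w x by (auto simp: Pi_def)
  have wi: "w i \<in> carrier G" using w i by auto
  have e: "lc G ({..<k} - {i}) (w(i := x)) (d(i := m)) = lc G ({..<k} - {i}) w d"
    using w by (intro lc_cong) auto
  have "lc G {..<k} (w(i := x)) (d(i := m)) = x [^] m \<otimes> lc G ({..<k} - {i}) w d"
    using lc_split[OF _ _ w', of i "d(i := m)"] i e by simp
  moreover have "lc G {..<k} w d = w i [^] d i \<otimes> lc G ({..<k} - {i}) w d"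
    using lc_split[OF _ _ w, of i d] i by simp
  moreover have "lc G ({..<k} - {i}) w d \<in> carrier G" using w by (auto simp: Pi_def)
  ultimately show ?thesis using x wi by (simp add: m_ac)
qed

lemma gens2_swap:
  assumes g: "gens2 k x w" and i: "i < k"
  shows "gens2 k (w i) (w(i := x))"
proof -
  have x: "x \<in> carrier G" and w: "w \<in> {..<k} \<rightarrow> carrier G" using g unfolding gens2_def by auto
  have "\<exists>m d. h = w i [^] (m::int) \<otimes> lc G {..<k} (w(i := x)) d" if h: "h \<in> carrier G" for h
  proof -
    obtain m d where "h = x [^] (m::int) \<otimes> lc G {..<k} w d" using g h unfolding gens2_def by blast
    then show ?thesis using swap_id[OF x w i] by blast
  qed
  then show ?thesis unfolding gens2_def using x w i by (auto simp: Pi_def)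
qed

lemma rel_neg:
  assumes x: "x \<in> carrier G" and w: "w \<in> {..<k} \<rightarrow> carrier G" and r: "rel k x w m d"
  shows "rel k x w (- m) (\<lambda>i. - d i)"
proof -
  have "x [^] (- m) \<otimes> lc G {..<k} w (\<lambda>i. - d i) = inv (x [^] m) \<otimes> inv (lc G {..<k} w d)"
    using x w by (simp add: int_pow_neg lc_inv)
  also have "\<dots> = inv (x [^] m \<otimes> lc G {..<k} w d)" using x w by (simp add: inv_mult)
  also have "\<dots> = \<one>" using r unfolding rel_def by simp
  finally show ?thesis unfolding rel_def .
qed

end


lemma finprod_subgroup_generated:
  assumes G: "comm_group G" and f: "f \<in> A \<rightarrow> carrier (subgroup_generated G S)"
  shows "finprod (subgroup_generated G S) f A = finprod G f A"
proof -
  interpret G: comm_group G by fact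
  interpret K: comm_group "subgroup_generated G S" by (rule G.abelian_subgroup_generated[OF G])
  have sub: "carrier (subgroup_generated G S) \<subseteq> carrier G"
    by (simp add: G.carrier_subgroup_generated_subset)
  show ?thesis
  proof (cases "finite A")
    case True
    then show ?thesis using f
    proof (induction A rule: finite_induct)
      case empty then show ?case by simp
    next
      case (insert x F)
      then have fx: "f x \<in> carrier (subgroup_generated G S)" and fF: "f \<in> F \<rightarrow> carrier (subgroup_generated G S)" by auto
      have "finprod (subgroup_generated G S) f (insert x F) = f x \<otimes>\<^bsub>G\<^esub> finprod (subgroup_generated G S) f F"
        using insert fx fF by (simp add: K.finprod_insert)
      also have "\<dots> = finprod G f (insert x F)"
        using insert fx fF sub by (subst G.finprod_insert) (auto simp: Pi_def)
      finally show ?case .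
    qed
  next
    case False then show ?thesis by simp
  qed
qed

lemma lc_subgroup_generated:
  assumes G: "comm_group G" and z: "z \<in> I \<rightarrow> carrier (subgroup_generated G S)"
  shows "lc (subgroup_generated G S) I z c = lc G I z c"
proof -
  interpret G: comm_group G by fact
  interpret K: comm_group "subgroup_generated G S" by (rule G.abelian_subgroup_generated[OF G])
  have cl: "z i [^]\<^bsub>G\<^esub> c i \<in> carrier (subgroup_generated G S)" if "i \<in> I" for i
  proof -
    have zi: "z i \<in> carrier (subgroup_generated G S)" using z that by auto
    then have "z i [^]\<^bsub>subgroup_generated G S\<^esub> c i \<in> carrier (subgroup_generated G S)" by simp
    then show ?thesis using G.int_pow_subgroup_generated[OF zi] by simp
  qed
  have "lc (subgroup_generated G S) I z c = finprod (subgroup_generated G S) (\<lambda>i. z i [^]\<^bsub>G\<^esub> c i) I"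
    unfolding lc_def using z cl by (intro K.finprod_cong') (auto simp: Pi_def G.int_pow_subgroup_generated)
  also have "\<dots> = lc G I z c"
    unfolding lc_def
    using cl by (intro finprod_subgroup_generated[OF G] Pi_I)
  finally show ?thesis .
qed

lemma structure_step:
  fixes k :: nat and G :: "('a, 'c) monoid_scheme" (structure)
  assumes G: "comm_group G" and gz: "gens G (Suc k) z"
    and IH: "\<And>(K :: ('a, 'c) monoid_scheme) z. comm_group K \<Longrightarrow> gens K k z \<Longrightarrow> \<exists>y. gens K k y \<and> indep_cyc K k y"
  shows "\<exists>y. gens G (Suc k) y \<and> indep_cyc G (Suc k) y"
proof -
  interpret comm_group G by fact
  define x0 where "x0 = z 0"
  define w0 where "w0 = (\<lambda>i. z (Suc i))"
  have zc: "z = case_nat x0 w0" unfolding x0_def w0_def by (rule ext) (simp split: nat.split)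
  have x0: "x0 \<in> carrier G" and w0: "w0 \<in> {..<k} \<rightarrow> carrier G"
    using gz unfolding gens_def x0_def w0_def by auto
  have g0: "gens2 k x0 w0" using gz gens_iff_gens2[OF x0 w0] zc by simp
  show ?thesis
  proof (cases "\<exists>x w. gens2 k x w \<and> (\<forall>m d. rel k x w m d \<longrightarrow> m = 0 \<and> (\<forall>i<k. d i = 0))")
    case True
    then obtain x w where gxw: "gens2 k x w" and fr0: "\<forall>m d. rel k x w m d \<longrightarrow> m = 0 \<and> (\<forall>i<k. d i = 0)"
      by auto
    have fr: "m = 0 \<and> (\<forall>i<k. d i = 0)" if "rel k x w m d" for m d using fr0 that by simp
    have x: "x \<in> carrier G" and w: "w \<in> {..<k} \<rightarrow> carrier G" using gxw unfolding gens2_def by auto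
    have "indep_cyc G (Suc k) (case_nat x w)"
      unfolding indep_cyc_def
    proof (intro allI impI)
      fix c i assume c: "lc G {..<Suc k} (case_nat x w) c = \<one>" and i: "i < Suc k"
      have "rel k x w (c 0) (\<lambda>i. c (Suc i))" using c lc_Suc[OF x w] unfolding rel_def by simp
      then have "c 0 = 0 \<and> (\<forall>j<k. c (Suc j) = 0)" by (rule fr)
      then show "case_nat x w i [^] c i = \<one>" using i x w by (cases i) (auto simp: Pi_def)
    qed
    then show ?thesis using gens_iff_gens2[OF x w] gxw by blast
  next
    case False
    have nf: "\<exists>m d. rel k x w m d \<and> (m \<noteq> 0 \<or> (\<exists>i<k. d i \<noteq> 0))" if "gens2 k x w" for x w
    proof -
      have "\<not> (\<forall>m d. rel k x w m d \<longrightarrow> m = 0 \<and> (\<forall>i<k. d i = 0))" using False that by blast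
      then show ?thesis by blast
    qed
    define M where "M = {a::nat. 0 < a \<and> (\<exists>x w d. gens2 k x w \<and> rel k x w (int a) d)}"
    have toM: "nat \<bar>m\<bar> \<in> M" if g: "gens2 k x w" and r: "rel k x w m d" and m: "m \<noteq> 0" for x w m d
    proof (cases "m > 0")
      case True
      then show ?thesis unfolding M_def using g r by auto
    next
      case False
      have x: "x \<in> carrier G" and w: "w \<in> {..<k} \<rightarrow> carrier G" using g unfolding gens2_def by auto
      have "rel k x w (- m) (\<lambda>i. - d i)" by (rule rel_neg[OF x w r])
      then show ?thesis unfolding M_def using g m False by (auto intro!: exI[of _ x] exI[of _ w])
    qed
    have Mne: "M \<noteq> {}"
    proof -
      obtain m d where r: "rel k x0 w0 m d" and nz: "m \<noteq> 0 \<or> (\<exists>i<k. d i \<noteq> 0)" using nf[OF g0] by blast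
      show ?thesis
      proof (cases "m \<noteq> 0")
        case True then show ?thesis using toM[OF g0 r] by blast
      next
        case False
        then obtain i where i: "i < k" "d i \<noteq> 0" using nz by blast
        have "rel k (w0 i) (w0(i := x0)) (d i) (d(i := m))"
          using r swap_id[OF x0 w0 i(1), of m d] unfolding rel_def by simp
        then show ?thesis using toM[OF gens2_swap[OF g0 i(1)] _ i(2)] by blast
      qed
    qed
    define a where "a = (LEAST a. a \<in> M)"
    have aM: "a \<in> M" unfolding a_def using Mne by (metis LeastI_ex ex_in_conv)
    have amin: "\<And>b. b \<in> M \<Longrightarrow> a \<le> b" unfolding a_def by (rule Least_le)
    obtain x w d where gxw: "gens2 k x w" and r: "rel k x w (int a) d" and apos: "0 < a"
      using aM unfolding M_def by blast
    have x: "x \<in> carrier G" and w: "w \<in> {..<k} \<rightarrow> carrier G" using gxw unfolding gens2_def by auto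
    have dv: "int a dvd d i" if i: "i < k" for i
    proof (rule ccontr)
      assume nd: "\<not> int a dvd d i"
      define q where "q = (\<lambda>j. if j = i then d i div int a else 0)"
      define x' where "x' = x \<otimes> lc G {..<k} w q"
      define d' where "d' = (\<lambda>j. d j - int a * q j)"
      have x': "x' \<in> carrier G" unfolding x'_def using x w by simp
      have r': "rel k x' w (int a) d'"
        using shift[OF x w, of q "int a" d] r unfolding rel_def x'_def d'_def by simp
      have g': "gens2 k x' w" unfolding x'_def by (rule gens2_shift[OF gxw])
      have di: "d' i = d i mod int a" unfolding d'_def q_def by (simp add: minus_div_mult_eq_mod[symmetric] mult.commute)
      have pos: "d' i > 0" using nd apos di by (simp add: dvd_eq_mod_eq_0 order_le_neq_trans)
      have lt: "d' i < int a" using di apos by simp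
      have r2: "rel k (w i) (w(i := x')) (d' i) (d'(i := int a))"
        using r' swap_id[OF x' w i, of "int a" d'] unfolding rel_def by simp
      have "nat \<bar>d' i\<bar> \<in> M" by (rule toM[OF gens2_swap[OF g' i] r2]) (use pos in simp)
      then have "a \<le> nat \<bar>d' i\<bar>" by (rule amin)
      then show False using lt pos by simp
    qed
    define q where "q = (\<lambda>j. d j div int a)"
    define x' where "x' = x \<otimes> lc G {..<k} w q"
    have x': "x' \<in> carrier G" unfolding x'_def using x w by simp
    have gx': "gens2 k x' w" unfolding x'_def by (rule gens2_shift[OF gxw])
    have xa: "x' [^] int a = \<one>"
    proof -
      have "x' [^] int a \<otimes> lc G {..<k} w (\<lambda>j. d j - int a * q j) = \<one>"
        using shift[OF x w, of q "int a" d] r unfolding rel_def x'_def by simp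
      moreover have "lc G {..<k} w (\<lambda>j. d j - int a * q j) = lc G {..<k} w (\<lambda>_. 0)"
        using w dv unfolding q_def by (intro lc_cong) (auto simp: Pi_def)
      ultimately show ?thesis using x' by simp
    qed
    have direct: "x' [^] m = \<one>" if rm: "rel k x' w m e" for m e
    proof -
      have "x' [^] m = x' [^] (int a * (m div int a) + m mod int a)" by (simp only: mult_div_mod_eq)
      also have "\<dots> = (x' [^] int a) [^] (m div int a) \<otimes> x' [^] (m mod int a)"
        by (subst int_pow_mult[OF x']) (simp add: int_pow_pow x')
      also have "\<dots> = x' [^] (m mod int a)" using xa x' by simp
      finally have em: "x' [^] m = x' [^] (m mod int a)" .
      have "rel k x' w (m mod int a) e" using rm em unfolding rel_def by simp
      moreover have "m mod int a \<ge> 0" "m mod int a < int a" using apos by auto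
      ultimately have "m mod int a = 0"
      proof (cases "m mod int a = 0")
        case False
        assume r2: "rel k x' w (m mod int a) e" and b: "m mod int a \<ge> 0" "m mod int a < int a"
        have "nat \<bar>m mod int a\<bar> \<in> M" by (rule toM[OF gx' r2 False])
        then have "a \<le> nat \<bar>m mod int a\<bar>" by (rule amin)
        then show ?thesis using b by simp
      qed
      then show ?thesis using em by simp
    qed
    define K where "K = subgroup_generated G (w ` {..<k})"
    have wG: "w ` {..<k} \<subseteq> carrier G" using w by auto
    have cK: "carrier K = generate G (w ` {..<k})"
      unfolding K_def carrier_subgroup_generated using wG by (simp add: Int_absorb1)
    have Kdef: "K = G\<lparr>carrier := generate G (w ` {..<k})\<rparr>"
      unfolding K_def subgroup_generated_def using wG by (simp add: Int_absorb1)
    have cgK: "comm_group K" unfolding K_def by (rule abelian_subgroup_generated) (rule comm_group_axioms)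
    have KG: "carrier K \<subseteq> carrier G" using cK generate_in_carrier[OF wG] by blast
    have gK: "gens K k w"
      unfolding gens_def
    proof
      show "w \<in> {..<k} \<rightarrow> carrier K" unfolding cK using generate.incl[of _ "w ` {..<k}" G] by auto
      show "generate K (w ` {..<k}) = carrier K"
      proof -
        have "w ` {..<k} \<subseteq> generate G (w ` {..<k})" using generate.incl[of _ "w ` {..<k}" G] by blast
        then show ?thesis unfolding Kdef using generate_consistent[OF _ generate_is_subgroup[OF wG]] by simp
      qed
    qed
    obtain v where gv: "gens K k v" and iv: "indep_cyc K k v" using IH[OF cgK gK] by blast
    have vK: "v \<in> {..<k} \<rightarrow> carrier K" using gv unfolding gens_def by simp
    have vG: "v \<in> {..<k} \<rightarrow> carrier G" using vK KG by auto
    have lcv: "lc K {..<k} v c = lc G {..<k} v c" for c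
      unfolding K_def by (rule lc_subgroup_generated[OF comm_group_axioms]) (use vK K_def in simp)
    have rK: "carrier K = range (lc G {..<k} v)"
    proof -
      have "carrier K = generate K (v ` {..<k})" using gv unfolding gens_def by simp
      also have "\<dots> = range (lc K {..<k} v)" by (rule comm_group.gen_lc[OF cgK _ vK]) simp
      finally show ?thesis using lcv by simp
    qed
    have rW: "carrier K = range (lc G {..<k} w)" unfolding cK by (rule gen_lc) (use w in auto)
    have gy: "gens2 k x' v"
      unfolding gens2_def
    proof (intro conjI ballI)
      show "x' \<in> carrier G" by fact
      show "v \<in> {..<k} \<rightarrow> carrier G" by fact
      fix g assume "g \<in> carrier G"
      then obtain m e where ge: "g = x' [^] (m::int) \<otimes> lc G {..<k} w e" using gx' unfolding gens2_def by blast
      have "lc G {..<k} w e \<in> carrier K" using rW by simp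
      then obtain e' where "lc G {..<k} w e = lc G {..<k} v e'" using rK by auto
      then show "\<exists>m d. g = x' [^] (m::int) \<otimes> lc G {..<k} v d" using ge by metis
    qed
    have iy: "indep_cyc G (Suc k) (case_nat x' v)"
      unfolding indep_cyc_def
    proof (intro allI impI)
      fix c i assume c: "lc G {..<Suc k} (case_nat x' v) c = \<one>" and i: "i < Suc k"
      have c1: "x' [^] c 0 \<otimes> lc G {..<k} v (\<lambda>i. c (Suc i)) = \<one>" using c lc_Suc[OF x' vG] by simp
      have "lc G {..<k} v (\<lambda>i. c (Suc i)) \<in> carrier K" using rK by simp
      then obtain e where e: "lc G {..<k} v (\<lambda>i. c (Suc i)) = lc G {..<k} w e" using rW by auto
      have "x' [^] c 0 = \<one>" using direct[of "c 0" e] c1 e unfolding rel_def by simp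
      then have c2: "lc G {..<k} v (\<lambda>i. c (Suc i)) = \<one>" using c1 vG by simp
      have "lc K {..<k} v (\<lambda>i. c (Suc i)) = \<one>\<^bsub>K\<^esub>" using c2 lcv unfolding K_def by simp
      then have vi: "\<forall>j<k. v j [^]\<^bsub>K\<^esub> c (Suc j) = \<one>\<^bsub>K\<^esub>" using iv unfolding indep_cyc_def by blast
      show "case_nat x' v i [^] c i = \<one>"
      proof (cases i)
        case 0 then show ?thesis using \<open>x' [^] c 0 = \<one>\<close> by simp
      next
        case (Suc j)
        then have "j < k" using i by simp
        then have "v j [^]\<^bsub>K\<^esub> c (Suc j) = \<one>\<^bsub>K\<^esub>" using vi by blast
        moreover have "v j [^]\<^bsub>K\<^esub> c (Suc j) = v j [^] c (Suc j)"
          unfolding K_def by (rule int_pow_subgroup_generated) (use vK \<open>j < k\<close> K_def in auto)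
        ultimately show ?thesis using Suc by (simp add: K_def)
      qed
    qed
    show ?thesis using gy iy gens_iff_gens2[OF x' vG] by blast
  qed
qed

lemma structure_fg:
  fixes k :: nat and G :: "('a, 'c) monoid_scheme"
  shows "comm_group G \<Longrightarrow> gens G k z \<Longrightarrow> \<exists>y. gens G k y \<and> indep_cyc G k y"
proof (induction k arbitrary: G z)
  case 0
  then show ?case unfolding indep_cyc_def by blast
next
  case (Suc k)
  show ?case by (rule structure_step[OF Suc.prems Suc.IH])
qed


lemma (in group) pow_abs_one:
  assumes "x \<in> carrier G" "x [^] (e::int) = \<one>" shows "x [^] \<bar>e\<bar> = \<one>"
proof (cases "e \<ge> 0")
  case True then show ?thesis using assms by simp
next
  case False
  then have "\<bar>e\<bar> = - e" by simp
  then show ?thesis using assms by (simp add: int_pow_neg)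
qed

context comm_group
begin

lemma lc_union:
  "finite A \<Longrightarrow> finite B \<Longrightarrow> A \<inter> B = {} \<Longrightarrow> z \<in> (A \<union> B) \<rightarrow> carrier G \<Longrightarrow>
   lc G (A \<union> B) z c = lc G A z c \<otimes> lc G B z c"
  unfolding lc_def by (rule finprod_Un_disjoint) (auto simp: Pi_def)

lemma lc_zero_on: "(\<And>i. i \<in> A \<Longrightarrow> c i = 0) \<Longrightarrow> lc G A z c = \<one>"
  unfolding lc_def by (rule finprod_one_eqI) simp

lemma lc_prod:
  assumes B: "finite B" and I: "finite I" and z: "z \<in> I \<rightarrow> carrier G"
  shows "finprod G (\<lambda>b. (lc G I z (cb b)) [^] (m b :: int)) B = lc G I z (\<lambda>i. \<Sum>b\<in>B. m b * cb b i)"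
  using B
proof (induction B rule: finite_induct)
  case empty then show ?case by (simp add: lc_zero_on)
next
  case (insert x F)
  have "finprod G (\<lambda>b. (lc G I z (cb b)) [^] (m b)) (insert x F)
      = (lc G I z (cb x)) [^] (m x) \<otimes> finprod G (\<lambda>b. (lc G I z (cb b)) [^] (m b)) F"
    using insert z by (subst finprod_insert) (auto simp: Pi_def)
  also have "\<dots> = lc G I z (\<lambda>i. m x * cb x i) \<otimes> lc G I z (\<lambda>i. \<Sum>b\<in>F. m b * cb b i)"
    using insert z I by (simp add: lc_pow)
  also have "\<dots> = lc G I z (\<lambda>i. \<Sum>b\<in>insert x F. m b * cb b i)"
    using insert z I by (simp add: lc_add)
  finally show ?case .
qed

end

locale fgdec = comm_group G for G (structure) +
  fixes k :: nat and y :: "nat \<Rightarrow> 'a"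
  assumes gy: "gens G k y" and iy: "indep_cyc G k y"
begin

definition TI where "TI = {i. i < k \<and> (\<exists>e::int. e > 0 \<and> y i [^] e = \<one>)}"
definition FI where "FI = {..<k} - TI"
definition ordi where "ordi i = (SOME e::int. e > 0 \<and> y i [^] e = \<one>)"
definition E where "E = (\<Prod>i\<in>TI. ordi i)"
definition TG where "TG = {g \<in> carrier G. g [^] E = \<one>}"
definition FG where "FG = generate G (y ` FI)"

lemma yc: "y \<in> {..<k} \<rightarrow> carrier G" using gy unfolding gens_def by simp

lemma finTI: "finite TI" unfolding TI_def by simp
lemma finFI: "finite FI" unfolding FI_def by simp
lemma TI_FI: "TI \<union> FI = {..<k}" unfolding FI_def TI_def by auto
lemma TI_FI_disj: "TI \<inter> FI = {}" unfolding FI_def by auto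
lemma FI_lt: "i \<in> FI \<Longrightarrow> i < k" unfolding FI_def by auto
lemma TI_lt: "i \<in> TI \<Longrightarrow> i < k" unfolding TI_def by auto
lemma yFI: "y \<in> FI \<rightarrow> carrier G" using yc FI_lt by auto
lemma yTI: "y \<in> TI \<rightarrow> carrier G" using yc TI_lt by auto

lemma ordi: "i \<in> TI \<Longrightarrow> ordi i > 0 \<and> y i [^] ordi i = \<one>"
  unfolding ordi_def TI_def by (rule someI_ex) auto

lemma Epos: "E > 0" unfolding E_def using ordi finTI by (simp add: prod_pos)

lemma yE: assumes "i \<in> TI" shows "y i [^] E = \<one>"
proof -
  have "ordi i dvd E" unfolding E_def using finTI assms by auto
  then obtain t where "E = ordi i * t" by (auto simp: dvd_def)
  moreover have "y i \<in> carrier G" using yc TI_lt assms by auto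
  ultimately show ?thesis using ordi[OF assms] by (simp add: int_pow_pow[symmetric])
qed

lemma free_pow: assumes "i \<in> FI" "y i [^] (e::int) = \<one>" shows "e = 0"
proof (rule ccontr)
  assume "e \<noteq> 0"
  moreover have "y i \<in> carrier G" using yc FI_lt assms by auto
  ultimately have "\<bar>e\<bar> > 0" "y i [^] \<bar>e\<bar> = \<one>" using pow_abs_one assms by auto
  then have "i \<in> TI" unfolding TI_def using FI_lt[OF assms(1)] by blast
  then show False using assms TI_FI_disj by auto
qed

lemma all_lc: "g \<in> carrier G \<Longrightarrow> \<exists>c. g = lc G {..<k} y c"
  using gen_lc[OF _ yc] gy unfolding gens_def by auto

lemma lc_indep: "lc G {..<k} y c = \<one> \<Longrightarrow> i < k \<Longrightarrow> y i [^] c i = \<one>"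
  using iy unfolding indep_cyc_def by blast

lemma lc_free_zero:
  assumes "(lc G {..<k} y c) [^] (m::int) = \<one>" "m \<noteq> 0" "i \<in> FI"
  shows "c i = 0"
proof -
  have "lc G {..<k} y (\<lambda>i. m * c i) = \<one>" using assms(1) lc_pow[OF _ yc] by simp
  then have "y i [^] (m * c i) = \<one>" using lc_indep FI_lt[OF assms(3)] by blast
  then have "m * c i = 0" using free_pow[OF assms(3)] by blast
  then show ?thesis using assms(2) by simp
qed

lemma lc_E_one:
  assumes "\<And>i. i \<in> FI \<Longrightarrow> c i = 0"
  shows "lc G {..<k} y (\<lambda>i. E * c i) = \<one>"
proof -
  have "lc G {..<k} y (\<lambda>i. E * c i) = lc G {..<k} y (\<lambda>_. 0)"
  proof (rule lc_cong[OF _ yc])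
    fix i assume i: "i \<in> {..<k}"
    have yi: "y i \<in> carrier G" using yc i by auto
    show "y i [^] (E * c i) = y i [^] (0::int)"
    proof (cases "i \<in> TI")
      case True then show ?thesis using yE yi by (simp add: int_pow_pow[symmetric])
    next
      case False then have "i \<in> FI" using i TI_FI by auto
      then show ?thesis using assms by simp
    qed
  qed
  then show ?thesis by simp
qed

lemma tors:
  assumes g: "g \<in> carrier G" and m: "g [^] (m::int) = \<one>" "m \<noteq> 0"
  shows "g [^] E = \<one>"
proof -
  obtain c where c: "g = lc G {..<k} y c" using all_lc g by blast
  have z: "\<And>i. i \<in> FI \<Longrightarrow> c i = 0" using lc_free_zero m c by blast
  have "g [^] E = lc G {..<k} y (\<lambda>i. E * c i)" using c lc_pow[OF _ yc] by simp
  also have "\<dots> = \<one>" using lc_E_one z by blast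
  finally show ?thesis .
qed

lemma TG_sub: "subgroup TG G"
proof (rule subgroupI)
  show "TG \<subseteq> carrier G" unfolding TG_def by auto
  show "TG \<noteq> {}" unfolding TG_def by (auto intro!: exI[of _ \<one>])
  fix a b assume a: "a \<in> TG" and b: "b \<in> TG"
  then show "inv a \<in> TG" unfolding TG_def by (auto simp: int_pow_inv)
  show "a \<otimes> b \<in> TG" using a b unfolding TG_def by (auto simp: int_pow_distrib)
qed

lemma TG_fin: "finite TG"
proof -
  have "TG \<subseteq> (\<lambda>c. lc G {..<k} y c) ` (\<Pi>\<^sub>E i\<in>{..<k}. {0..<E})"
  proof
    fix g assume g: "g \<in> TG"
    then have gc: "g \<in> carrier G" and gE: "g [^] E = \<one>" unfolding TG_def by auto
    obtain c where c: "g = lc G {..<k} y c" using all_lc gc by blast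
    have z: "\<And>i. i \<in> FI \<Longrightarrow> c i = 0" using lc_free_zero gE c Epos by (metis less_irrefl)
    define c' where "c' = (\<lambda>i\<in>{..<k}. c i mod E)"
    have "c' \<in> (\<Pi>\<^sub>E i\<in>{..<k}. {0..<E})" unfolding c'_def using Epos by auto
    moreover have "lc G {..<k} y c' = g"
      unfolding c
    proof (rule lc_cong[OF _ yc])
      fix i assume i: "i \<in> {..<k}"
      have yi: "y i \<in> carrier G" using yc i by auto
      show "y i [^] c' i = y i [^] c i"
      proof (cases "i \<in> TI")
        case True
        have "y i [^] c i = y i [^] (E * (c i div E) + c i mod E)" by (simp only: mult_div_mod_eq)
        also have "\<dots> = (y i [^] E) [^] (c i div E) \<otimes> y i [^] (c i mod E)"
          by (subst int_pow_mult[OF yi]) (simp add: int_pow_pow yi)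
        also have "\<dots> = y i [^] (c i mod E)" using yE[OF True] yi by simp
        finally show ?thesis unfolding c'_def using i by simp
      next
        case False then have "i \<in> FI" using i TI_FI by auto
        then show ?thesis unfolding c'_def using i z by simp
      qed
    qed
    ultimately show "g \<in> (\<lambda>c. lc G {..<k} y c) ` (\<Pi>\<^sub>E i\<in>{..<k}. {0..<E})" by blast
  qed
  moreover have "finite (\<Pi>\<^sub>E i\<in>{..<k}. {0..<E})" by (rule finite_PiE) auto
  ultimately show ?thesis by (meson finite_surj)
qed

lemma FG_sub: "subgroup FG G"
  unfolding FG_def by (rule generate_is_subgroup) (use yFI in auto)

lemma FG_range: "FG = range (lc G FI y)"
  unfolding FG_def by (rule gen_lc[OF finFI yFI])

lemma lc_ext_FI: "lc G {..<k} y (\<lambda>i. if i \<in> FI then c i else 0) = lc G FI y c"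
proof -
  have "lc G {..<k} y (\<lambda>i. if i \<in> FI then c i else 0)
      = lc G TI y (\<lambda>i. if i \<in> FI then c i else 0) \<otimes> lc G FI y (\<lambda>i. if i \<in> FI then c i else 0)"
    using lc_union[OF finTI finFI TI_FI_disj] yc TI_FI by simp
  also have "lc G TI y (\<lambda>i. if i \<in> FI then c i else 0) = \<one>"
    using TI_FI_disj by (intro lc_zero_on) auto
  also have "lc G FI y (\<lambda>i. if i \<in> FI then c i else 0) = lc G FI y c"
    using yFI by (intro lc_cong) auto
  finally show ?thesis using lc_closed[OF yFI] by simp
qed

lemma lc_FI_one: "lc G FI y c = \<one> \<Longrightarrow> i \<in> FI \<Longrightarrow> c i = 0"
  using lc_indep[of "\<lambda>i. if i \<in> FI then c i else 0" i] lc_ext_FI FI_lt free_pow by fastforce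

lemma TF_int: "TG \<inter> FG \<subseteq> {\<one>}"
proof
  fix g assume "g \<in> TG \<inter> FG"
  then obtain c where g: "g = lc G FI y c" and gE: "g [^] E = \<one>" unfolding FG_range TG_def by auto
  have "(lc G {..<k} y (\<lambda>i. if i \<in> FI then c i else 0)) [^] E = \<one>" using gE g lc_ext_FI by simp
  then have "\<And>i. i \<in> FI \<Longrightarrow> c i = 0" using lc_free_zero[of _ E] Epos by fastforce
  then have "g = \<one>" using g by (simp add: lc_zero_on)
  then show "g \<in> {\<one>}" by simp
qed

lemma TF_mult: "TG <#> FG = carrier G"
proof
  show "TG <#> FG \<subseteq> carrier G"
    using TG_sub FG_sub by (simp add: set_mult_closed subgroup.subset)
  show "carrier G \<subseteq> TG <#> FG"
  proof
    fix g assume "g \<in> carrier G"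
    then obtain c where c: "g = lc G {..<k} y c" using all_lc by blast
    have "g = lc G TI y c \<otimes> lc G FI y c"
      using c lc_union[OF finTI finFI TI_FI_disj] yc TI_FI by simp
    moreover have "lc G TI y c \<in> TG"
    proof -
      have "(lc G TI y c) [^] E = lc G TI y (\<lambda>i. E * c i)" using lc_pow[OF finTI yTI] by simp
      also have "\<dots> = lc G TI y (\<lambda>_. 0)"
        using yTI yE by (intro lc_cong) (auto simp: int_pow_pow[symmetric] Pi_def)
      finally show ?thesis unfolding TG_def using yTI by simp
    qed
    moreover have "lc G FI y c \<in> FG" unfolding FG_range by simp
    ultimately show "g \<in> TG <#> FG" unfolding set_mult_def by blast
  qed
qed

lemma iso_TF: "subgroup_generated G TG \<times>\<times> subgroup_generated G FG \<cong> G"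
proof -
  interpret gds: group_disjoint_sum G TG FG
    by (intro group_disjoint_sum.intro is_group TG_sub FG_sub)
  have "(\<lambda>(x, y). x \<otimes> y) \<in> iso (subgroup_generated G TG \<times>\<times> subgroup_generated G FG) G"
    using gds.iso_group_mul[OF comm_group_axioms] TF_int TF_mult by simp
  then show ?thesis by (rule is_isoI)
qed

end


context fgdec
begin

definition rk where "rk = card FI"
definition fb where "fb = (SOME f. bij_betw f {..<rk} FI)"
definition u where "u = (\<lambda>j. y (fb j))"
definition Zr where "Zr = product_group {..<rk} (\<lambda>_. integer_group)"

lemma fb_bij: "bij_betw fb {..<rk} FI"
proof -
  have "\<exists>f. bij_betw f {..<rk} FI"
    using ex_bij_betw_nat_finite[OF finFI] unfolding rk_def by (simp add: atLeast0LessThan)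
  then show ?thesis unfolding fb_def by (rule someI_ex)
qed

lemma uc: "u \<in> {..<rk} \<rightarrow> carrier G"
  using fb_bij yFI unfolding u_def bij_betw_def by auto

lemma lc_u: "lc G {..<rk} u e = lc G FI y (\<lambda>i. e (inv_into {..<rk} fb i))"
proof -
  have FI: "FI = fb ` {..<rk}" using fb_bij unfolding bij_betw_def by simp
  have inj: "inj_on fb {..<rk}" using fb_bij unfolding bij_betw_def by simp
  have "lc G FI y (\<lambda>i. e (inv_into {..<rk} fb i))
       = finprod G (\<lambda>i. y i [^] e (inv_into {..<rk} fb i)) (fb ` {..<rk})"
    unfolding lc_def FI ..
  also have "\<dots> = finprod G (\<lambda>j. y (fb j) [^] e (inv_into {..<rk} fb (fb j))) {..<rk}"
    using yFI FI inj by (subst finprod_reindex) (auto simp: Pi_def)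
  also have "\<dots> = lc G {..<rk} u e"
    unfolding lc_def u_def using inj uc unfolding u_def by (intro finprod_cong') (auto simp: Pi_def)
  finally show ?thesis by simp
qed

lemma free_indep: "lc G {..<rk} u e = \<one> \<Longrightarrow> j < rk \<Longrightarrow> e j = 0"
proof -
  assume h: "lc G {..<rk} u e = \<one>" "j < rk"
  have inj: "inj_on fb {..<rk}" using fb_bij unfolding bij_betw_def by simp
  have "fb j \<in> FI" using fb_bij h(2) unfolding bij_betw_def by auto
  then have "e (inv_into {..<rk} fb (fb j)) = 0" using lc_FI_one h(1) lc_u by simp
  then show "e j = 0" using inj h(2) by simp
qed

lemma FG_range_u: "FG = range (lc G {..<rk} u)"
proof -
  have "u ` {..<rk} = y ` (fb ` {..<rk})" unfolding u_def by (rule image_image[symmetric])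
  then have "u ` {..<rk} = y ` FI" using fb_bij unfolding bij_betw_def by simp
  then show ?thesis unfolding FG_def using gen_lc[OF _ uc] by simp
qed

lemma iso_free: "Zr \<cong> subgroup_generated G FG"
proof -
  have cZ: "carrier Zr = (\<Pi>\<^sub>E i\<in>{..<rk}. UNIV)" unfolding Zr_def by simp
  have mZ: "\<And>c d. c \<otimes>\<^bsub>Zr\<^esub> d = (\<lambda>i\<in>{..<rk}. c i + d i)" unfolding Zr_def by simp
  have cS: "carrier (subgroup_generated G FG) = FG" using subgroup.carrier_subgroup_generated_subgroup[OF FG_sub] .
  define \<Theta> where "\<Theta> = (\<lambda>c. lc G {..<rk} u c)"
  have hom: "\<Theta> \<in> hom Zr (subgroup_generated G FG)"
  proof (rule homI)
    fix c assume "c \<in> carrier Zr"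
    have "\<Theta> c \<in> FG" unfolding FG_range_u \<Theta>_def by simp
    then show "\<Theta> c \<in> carrier (subgroup_generated G FG)" using cS by simp
  next
    fix c d assume "c \<in> carrier Zr" "d \<in> carrier Zr"
    have "\<Theta> (c \<otimes>\<^bsub>Zr\<^esub> d) = lc G {..<rk} u (\<lambda>i. c i + d i)"
      unfolding \<Theta>_def mZ by (rule lc_cong[OF _ uc]) simp
    also have "\<dots> = \<Theta> c \<otimes> \<Theta> d" unfolding \<Theta>_def using lc_add[OF _ uc] by simp
    finally show "\<Theta> (c \<otimes>\<^bsub>Zr\<^esub> d) = \<Theta> c \<otimes>\<^bsub>subgroup_generated G FG\<^esub> \<Theta> d" by simp
  qed
  have inj: "inj_on \<Theta> (carrier Zr)"
  proof (rule inj_onI)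
    fix c d assume c: "c \<in> carrier Zr" and d: "d \<in> carrier Zr" and e: "\<Theta> c = \<Theta> d"
    have "lc G {..<rk} u (\<lambda>i. c i + - d i) = \<Theta> c \<otimes> inv (\<Theta> d)"
      unfolding \<Theta>_def using lc_add[OF _ uc] lc_inv[OF _ uc] by simp
    also have "\<dots> = \<one>" using e unfolding \<Theta>_def using uc by simp
    finally have "\<And>j. j < rk \<Longrightarrow> c j + - d j = 0" using free_indep by blast
    then show "c = d" using c d unfolding cZ by (intro PiE_ext) auto
  qed
  have surj: "\<Theta> ` carrier Zr = carrier (subgroup_generated G FG)"
  proof
    show "\<Theta> ` carrier Zr \<subseteq> carrier (subgroup_generated G FG)" using hom unfolding hom_def by auto
    show "carrier (subgroup_generated G FG) \<subseteq> \<Theta> ` carrier Zr"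
    proof
      fix g assume "g \<in> carrier (subgroup_generated G FG)"
      then have "g \<in> FG" using cS by simp
      then obtain c where g: "g = lc G {..<rk} u c" unfolding FG_range_u by auto
      have "\<Theta> (restrict c {..<rk}) = g" unfolding \<Theta>_def g by (rule lc_cong[OF _ uc]) simp
      moreover have "restrict c {..<rk} \<in> carrier Zr" unfolding cZ by simp
      ultimately show "g \<in> \<Theta> ` carrier Zr" by blast
    qed
  qed
  have "\<Theta> \<in> iso Zr (subgroup_generated G FG)"
    unfolding iso_def bij_betw_def using hom inj surj by simp
  then show ?thesis by (rule is_isoI)
qed

lemma y_inj: "inj_on y FI"
proof (rule inj_onI, rule ccontr)
  fix i j assume i: "i \<in> FI" and j: "j \<in> FI" and e: "y i = y j" and ne: "i \<noteq> j"
  define c where "c = (\<lambda>l. if l = i then 1 else if l = j then -1 else (0::int))"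
  have yi: "y i \<in> carrier G" and yj: "y j \<in> carrier G" using yFI i j by auto
  have "lc G FI y c = y i [^] c i \<otimes> lc G (FI - {i}) y c" by (rule lc_split[OF finFI i yFI])
  also have "lc G (FI - {i}) y c = y j [^] c j \<otimes> lc G (FI - {i} - {j}) y c"
    by (rule lc_split) (use finFI j ne yFI in auto)
  also have "lc G (FI - {i} - {j}) y c = \<one>" unfolding c_def by (rule lc_zero_on) auto
  finally have "lc G FI y c = y i \<otimes> inv (y j)" using ne yi yj by (simp add: c_def int_pow_neg)
  also have "\<dots> = \<one>" using e yj by simp
  finally have "c i = 0" using lc_FI_one i by blast
  then show False unfolding c_def by simp
qed

lemma yFI_indep: "Z_independent G (y ` FI)"
  unfolding Z_independent_def
proof (intro conjI allI impI)
  show "y ` FI \<subseteq> carrier G" using yFI by auto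
  fix S c assume h: "finite S \<and> S \<subseteq> y ` FI \<and> finprod G (\<lambda>x. x [^] (c x :: int)) S = \<one>"
  define S' where "S' = FI \<inter> y -` S"
  have SS': "S = y ` S'" unfolding S'_def using h by auto
  have S'FI: "S' \<subseteq> FI" unfolding S'_def by auto
  have injS': "inj_on y S'" using y_inj S'FI inj_on_subset by blast
  define d where "d = (\<lambda>i. if i \<in> S' then c (y i) else 0)"
  have "lc G FI y d = lc G (S' \<union> (FI - S')) y d" using S'FI by (simp add: Un_absorb1)
  also have "\<dots> = lc G S' y d \<otimes> lc G (FI - S') y d"
    by (rule lc_union) (use finFI S'FI yFI finite_subset in auto)
  also have "lc G (FI - S') y d = \<one>" unfolding d_def by (rule lc_zero_on) auto
  also have "lc G S' y d = finprod G (\<lambda>x. x [^] c x) S"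
    unfolding SS' lc_def using injS' S'FI yFI
    by (subst finprod_reindex) (auto simp: d_def Pi_def intro!: finprod_cong')
  finally have "lc G FI y d = \<one>" using h yFI S'FI by auto
  have "c (y i) = 0" if i: "i \<in> S'" for i
  proof -
    have "d i = 0" using lc_FI_one[OF \<open>lc G FI y d = \<one>\<close>] i S'FI by blast
    then show ?thesis using i unfolding d_def by simp
  qed
  then show "\<forall>x\<in>S. c x = 0" unfolding SS' by blast
qed

lemma card_yFI: "card (y ` FI) = rk"
  unfolding rk_def using y_inj by (simp add: card_image)

lemma rank_bound:
  assumes B: "Z_independent G B" and B0: "B0 \<subseteq> B" "finite B0"
  shows "card B0 \<le> rk"
proof (rule ccontr)
  assume "\<not> card B0 \<le> rk"
  then have lt: "card FI < card B0" unfolding rk_def by simp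
  have Bc: "B0 \<subseteq> carrier G" using B B0 unfolding Z_independent_def by auto
  define cb where "cb = (\<lambda>b. SOME c. b = lc G {..<k} y c)"
  have cb: "b = lc G {..<k} y (cb b)" if "b \<in> B0" for b
  proof -
    have "\<exists>c. b = lc G {..<k} y c" using all_lc Bc that by blast
    then show ?thesis unfolding cb_def by (rule someI_ex)
  qed
  obtain c where c1: "\<exists>b\<in>B0. c b \<noteq> 0" and c2: "\<forall>i\<in>FI. (\<Sum>b\<in>B0. c b * cb b i) = 0"
    using int_dep[OF finFI B0(2) lt, of cb] by blast
  have "finprod G (\<lambda>b. b [^] (E * c b)) B0 = finprod G (\<lambda>b. (lc G {..<k} y (cb b)) [^] (E * c b)) B0"
    using cb Bc by (intro finprod_cong') (auto simp: Pi_def)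
  also have "\<dots> = lc G {..<k} y (\<lambda>i. \<Sum>b\<in>B0. (E * c b) * cb b i)"
    by (rule lc_prod[OF B0(2) _ yc]) simp
  also have "\<dots> = lc G {..<k} y (\<lambda>i. E * (\<Sum>b\<in>B0. c b * cb b i))"
    by (simp add: sum_distrib_left mult.assoc)
  also have "\<dots> = \<one>" using c2 by (intro lc_E_one) simp
  finally have "finprod G (\<lambda>b. b [^] (E * c b)) B0 = \<one>" .
  then have "\<And>b. b \<in> B0 \<Longrightarrow> E * c b = 0" using Z_indepD[OF B B0(2) B0(1), of "\<lambda>b. E * c b"] by blast
  then show False using c1 Epos by auto
qed

end


lemma fin_gen_gens:
  assumes "fin_gen G" shows "\<exists>k z. gens G k z"
proof -
  obtain S where S: "finite S" "S \<subseteq> carrier G" "generate G S = carrier G" using assms unfolding fin_gen_def by blast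
  obtain h where h: "bij_betw h {0..<card S} S" using ex_bij_betw_nat_finite[OF S(1)] by blast
  then have hS: "h ` {..<card S} = S" unfolding bij_betw_def by (simp add: atLeast0LessThan)
  have "gens G (card S) h" unfolding gens_def hS using S hS by auto
  then show ?thesis by blast
qed

lemma fgdec_exists:
  assumes "comm_group G" "fin_gen G" shows "\<exists>k y. fgdec G k y"
proof -
  obtain k z where "gens G k z" using fin_gen_gens[OF assms(2)] by blast
  then obtain y where "gens G k y" "indep_cyc G k y" using structure_fg[OF assms(1)] by blast
  then have "fgdec G k y" using assms(1) by (simp add: fgdec_def fgdec_axioms_def)
  then show ?thesis by blast
qed

lemma fin_gen_transfer:
  assumes G: "comm_group G" and H: "comm_group H" and fH: "fin_gen H" and cop: "gcd m n = 1"
    and ma: "mult_arrow m G H" and na: "mult_arrow n G H"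
  shows "fin_gen G"
proof -
  interpret G: comm_group G by fact
  interpret H: comm_group H by fact
  obtain \<phi>1 \<psi>1 where \<phi>1: "\<phi>1 \<in> hom G H" and \<psi>1: "\<psi>1 \<in> hom H G"
    and pp1: "\<And>x. x \<in> carrier G \<Longrightarrow> \<psi>1 (\<phi>1 x) = x [^]\<^bsub>G\<^esub> m"
    using ma unfolding mult_arrow_def by blast
  obtain \<phi>2 \<psi>2 where \<phi>2: "\<phi>2 \<in> hom G H" and \<psi>2: "\<psi>2 \<in> hom H G"
    and pp2: "\<And>x. x \<in> carrier G \<Longrightarrow> \<psi>2 (\<phi>2 x) = x [^]\<^bsub>G\<^esub> n"
    using na unfolding mult_arrow_def by blast
  interpret h1: group_hom H G \<psi>1 using \<psi>1 by (simp add: group_hom_axioms_def group_hom_def G.is_group H.is_group)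
  interpret h2: group_hom H G \<psi>2 using \<psi>2 by (simp add: group_hom_axioms_def group_hom_def G.is_group H.is_group)
  obtain a b where ab: "a * m + b * n = 1" using bezout_int[of m n] cop by auto
  obtain S where S: "finite S" "S \<subseteq> carrier H" "generate H S = carrier H" using fH unfolding fin_gen_def by blast
  define T where "T = \<psi>1 ` S \<union> \<psi>2 ` S"
  have T: "finite T" "T \<subseteq> carrier G" unfolding T_def using S by auto
  have sT: "subgroup (generate G T) G" using T(2) by (rule G.generate_is_subgroup)
  have "carrier G \<subseteq> generate G T"
  proof
    fix x assume x: "x \<in> carrier G"
    have e: "x = \<psi>1 (\<phi>1 x [^]\<^bsub>H\<^esub> a) \<otimes>\<^bsub>G\<^esub> \<psi>2 (\<phi>2 x [^]\<^bsub>H\<^esub> b)"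
    proof -
      have "\<psi>1 (\<phi>1 x [^]\<^bsub>H\<^esub> a) \<otimes>\<^bsub>G\<^esub> \<psi>2 (\<phi>2 x [^]\<^bsub>H\<^esub> b) = (x [^]\<^bsub>G\<^esub> m) [^]\<^bsub>G\<^esub> a \<otimes>\<^bsub>G\<^esub> (x [^]\<^bsub>G\<^esub> n) [^]\<^bsub>G\<^esub> b"
        using x \<phi>1 \<phi>2 by (simp add: h1.hom_int_pow h2.hom_int_pow hom_in_carrier pp1 pp2)
      also have "\<dots> = x [^]\<^bsub>G\<^esub> (m * a + n * b)" using x by (simp add: G.int_pow_pow G.int_pow_mult)
      also have "m * a + n * b = 1" using ab by (simp add: mult.commute)
      finally show ?thesis using x by simp
    qed
    have i1: "\<psi>1 (\<phi>1 x [^]\<^bsub>H\<^esub> a) \<in> generate G T"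
    proof -
      have "\<phi>1 x [^]\<^bsub>H\<^esub> a \<in> generate H S" using S x \<phi>1 by (simp add: hom_in_carrier)
      then have "\<psi>1 (\<phi>1 x [^]\<^bsub>H\<^esub> a) \<in> generate G (\<psi>1 ` S)" using h1.generate_img[OF S(2)] by blast
      moreover have "generate G (\<psi>1 ` S) \<subseteq> generate G T" unfolding T_def using T(2)
        by (intro G.mono_generate) auto
      ultimately show ?thesis by blast
    qed
    have i2: "\<psi>2 (\<phi>2 x [^]\<^bsub>H\<^esub> b) \<in> generate G T"
    proof -
      have "\<phi>2 x [^]\<^bsub>H\<^esub> b \<in> generate H S" using S x \<phi>2 by (simp add: hom_in_carrier)
      then have "\<psi>2 (\<phi>2 x [^]\<^bsub>H\<^esub> b) \<in> generate G (\<psi>2 ` S)" using h2.generate_img[OF S(2)] by blast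
      moreover have "generate G (\<psi>2 ` S) \<subseteq> generate G T" unfolding T_def using T(2)
        by (intro G.mono_generate) auto
      ultimately show ?thesis by blast
    qed
    show "x \<in> generate G T" using e i1 i2 subgroup.m_closed[OF sT] by metis
  qed
  then have "generate G T = carrier G" using G.generate_in_carrier[OF T(2)] by blast
  then show ?thesis unfolding fin_gen_def using T by blast
qed

lemma tor_map:
  assumes fG: "fgdec G kG yG" and fH: "fgdec H kH yH" and ma: "mult_arrow n G H"
    and cop: "gcd n (fgdec.E G kG yG) = 1"
  shows "\<exists>\<phi>. \<phi> \<in> hom G H \<and> inj_on \<phi> (fgdec.TG G kG yG) \<and> \<phi> ` fgdec.TG G kG yG \<subseteq> fgdec.TG H kH yH"
proof -
  interpret G: fgdec G kG yG by fact
  interpret H: fgdec H kH yH by fact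
  obtain \<phi> \<psi> where \<phi>: "\<phi> \<in> hom G H" and \<psi>: "\<psi> \<in> hom H G"
    and pp: "\<And>x. x \<in> carrier G \<Longrightarrow> \<psi> (\<phi> x) = x [^]\<^bsub>G\<^esub> n"
    using ma unfolding mult_arrow_def by blast
  interpret h\<phi>: group_hom G H \<phi> using \<phi> by (simp add: group_hom_axioms_def group_hom_def G.is_group H.is_group)
  interpret h\<psi>: group_hom H G \<psi> using \<psi> by (simp add: group_hom_axioms_def group_hom_def G.is_group H.is_group)
  obtain a b where ab: "a * n + b * G.E = 1" using bezout_int[of n G.E] cop by auto
  have img: "\<phi> ` G.TG \<subseteq> H.TG"
  proof
    fix h assume "h \<in> \<phi> ` G.TG"
    then obtain g where g: "g \<in> carrier G" "g [^]\<^bsub>G\<^esub> G.E = \<one>\<^bsub>G\<^esub>" "h = \<phi> g" unfolding G.TG_def by auto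
    have hc: "h \<in> carrier H" using g by simp
    have "h [^]\<^bsub>H\<^esub> G.E = \<one>\<^bsub>H\<^esub>" using g by (simp add: h\<phi>.hom_int_pow[symmetric])
    then have "h [^]\<^bsub>H\<^esub> H.E = \<one>\<^bsub>H\<^esub>" using H.tors[OF hc] G.Epos by simp
    then show "h \<in> H.TG" unfolding H.TG_def using hc by simp
  qed
  have inj: "inj_on \<phi> G.TG"
  proof (rule inj_onI)
    fix g g' assume g: "g \<in> G.TG" and g': "g' \<in> G.TG" and e: "\<phi> g = \<phi> g'"
    define h where "h = g \<otimes>\<^bsub>G\<^esub> inv\<^bsub>G\<^esub> g'"
    have gc: "g \<in> carrier G" and gc': "g' \<in> carrier G" using g g' unfolding G.TG_def by auto
    have hT: "h \<in> G.TG" unfolding h_def using G.TG_sub g g' by (simp add: subgroup.m_closed subgroup.m_inv_closed)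
    then have hc: "h \<in> carrier G" and hE: "h [^]\<^bsub>G\<^esub> G.E = \<one>\<^bsub>G\<^esub>" unfolding G.TG_def by auto
    have "\<phi> h = \<one>\<^bsub>H\<^esub>" unfolding h_def using gc gc' e by simp
    then have hn: "h [^]\<^bsub>G\<^esub> n = \<one>\<^bsub>G\<^esub>" using pp[OF hc] by simp
    have "h = h [^]\<^bsub>G\<^esub> (n * a + G.E * b)" using ab hc by (simp add: mult.commute)
    also have "\<dots> = (h [^]\<^bsub>G\<^esub> n) [^]\<^bsub>G\<^esub> a \<otimes>\<^bsub>G\<^esub> (h [^]\<^bsub>G\<^esub> G.E) [^]\<^bsub>G\<^esub> b"
      using hc by (simp add: G.int_pow_mult G.int_pow_pow)
    also have "\<dots> = \<one>\<^bsub>G\<^esub>" using hn hE by simp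
    finally have "g \<otimes>\<^bsub>G\<^esub> inv\<^bsub>G\<^esub> g' = \<one>\<^bsub>G\<^esub>" unfolding h_def .
    then show "g = g'" using gc gc' by (metis G.inv_equality G.inv_inv G.inv_closed)
  qed
  show ?thesis using \<phi> inj img by blast
qed


lemma partB:
  assumes G: "comm_group G" and H: "comm_group H" and cop: "gcd m n = 1"
    and ma: "mult_arrow m G H" and na: "mult_arrow n G H"
  shows "direct_summand G (H \<times>\<times> H)"
proof -
  interpret G: comm_group G by fact
  interpret H: comm_group H by fact
  obtain \<phi>1 \<psi>1 where \<phi>1: "\<phi>1 \<in> hom G H" and \<psi>1: "\<psi>1 \<in> hom H G"
    and pp1: "\<And>x. x \<in> carrier G \<Longrightarrow> \<psi>1 (\<phi>1 x) = x [^]\<^bsub>G\<^esub> m"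
    using ma unfolding mult_arrow_def by blast
  obtain \<phi>2 \<psi>2 where \<phi>2: "\<phi>2 \<in> hom G H" and \<psi>2: "\<psi>2 \<in> hom H G"
    and pp2: "\<And>x. x \<in> carrier G \<Longrightarrow> \<psi>2 (\<phi>2 x) = x [^]\<^bsub>G\<^esub> n"
    using na unfolding mult_arrow_def by blast
  obtain a b where ab: "a * m + b * n = 1" using bezout_int[of m n] cop by auto
  have HH: "comm_group (H \<times>\<times> H)"
    by (rule group.group_comm_groupI[OF DirProd_group[OF H.is_group H.is_group]]) (auto simp: H.m_comm)
  define P where "P = (\<lambda>x. (\<phi>1 x [^]\<^bsub>H\<^esub> a, \<phi>2 x [^]\<^bsub>H\<^esub> b))"
  define Q where "Q = (\<lambda>(u,v). \<psi>1 u \<otimes>\<^bsub>G\<^esub> \<psi>2 v)"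
  have P: "P \<in> hom G (H \<times>\<times> H)"
    unfolding hom_pairwise P_def o_def
    using hom_pow_comm[OF G.is_group H \<phi>1] hom_pow_comm[OF G.is_group H \<phi>2] by simp
  have Q: "Q \<in> hom (H \<times>\<times> H) G"
    using \<psi>1 \<psi>2 unfolding Q_def hom_def
    by (auto simp: Pi_def G.m_ac)
  have "Q (P x) = x" if x: "x \<in> carrier G" for x
  proof -
    have "Q (P x) = \<psi>1 (\<phi>1 x) [^]\<^bsub>G\<^esub> a \<otimes>\<^bsub>G\<^esub> \<psi>2 (\<phi>2 x) [^]\<^bsub>G\<^esub> b"
      unfolding Q_def P_def using x \<phi>1 \<phi>2 \<psi>1 \<psi>2
      by (simp add: hom_int_pow[OF \<psi>1 _ H.is_group G.is_group] hom_int_pow[OF \<psi>2 _ H.is_group G.is_group]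
           hom_in_carrier)
    also have "\<dots> = x [^]\<^bsub>G\<^esub> (m * a + n * b)"
      using x by (simp add: pp1 pp2 G.int_pow_pow G.int_pow_mult)
    also have "m * a + n * b = 1" using ab by (simp add: mult.commute)
    finally show ?thesis using x by simp
  qed
  then show ?thesis using retract_direct_summand[OF G HH P Q] by blast
qed



lemma star_two:
  assumes "star_arrow G H"
  shows "\<exists>m n::int. m \<noteq> 0 \<and> n \<noteq> 0 \<and> gcd m n = 1 \<and> mult_arrow m G H \<and> mult_arrow n G H"
proof -
  have st: "\<And>r::int. r \<noteq> 0 \<Longrightarrow> \<exists>n::int. n \<noteq> 0 \<and> gcd n r = 1 \<and> mult_arrow n G H"
    using assms unfolding star_arrow_def by blast
  have "\<exists>n::int. n \<noteq> 0 \<and> gcd n 1 = 1 \<and> mult_arrow n G H" using st[of 1] by simp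
  then obtain m :: int where m: "m \<noteq> 0 \<and> gcd m 1 = 1 \<and> mult_arrow m G H" ..
  have "\<exists>n::int. n \<noteq> 0 \<and> gcd n m = 1 \<and> mult_arrow n G H" using st m by blast
  then obtain n :: int where n: "n \<noteq> 0 \<and> gcd n m = 1 \<and> mult_arrow n G H" ..
  have "gcd m n = 1" using n by (metis gcd.commute)
  then show ?thesis using m n by (intro exI[of _ m] exI[of _ n] conjI) simp_all
qed



lemma partC:
  assumes G: "comm_group G" and H: "comm_group H" and cop: "gcd n r = 1"
    and na: "mult_arrow n G H" and tor: "\<forall>x \<in> carrier G. x [^]\<^bsub>G\<^esub> r = \<one>\<^bsub>G\<^esub>"
  shows "direct_summand G H"
proof -
  interpret G: comm_group G by fact
  interpret H: comm_group H by fact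
  obtain \<phi> \<psi> where \<phi>: "\<phi> \<in> hom G H" and \<psi>: "\<psi> \<in> hom H G"
    and pp: "\<And>x. x \<in> carrier G \<Longrightarrow> \<psi> (\<phi> x) = x [^]\<^bsub>G\<^esub> n"
    using na unfolding mult_arrow_def by blast
  obtain a b where ab: "a * n + b * r = 1" using bezout_int[of n r] cop by auto
  define P where "P = (\<lambda>x. \<phi> x [^]\<^bsub>H\<^esub> a)"
  have P: "P \<in> hom G H" unfolding P_def by (rule hom_pow_comm[OF G.is_group H \<phi>])
  have "\<psi> (P x) = x" if x: "x \<in> carrier G" for x
  proof -
    have "\<psi> (P x) = x [^]\<^bsub>G\<^esub> (n * a)"
      unfolding P_def using x \<phi>
      by (simp add: hom_int_pow[OF \<psi> _ H.is_group G.is_group] hom_in_carrier pp G.int_pow_pow)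
    also have "\<dots> = x [^]\<^bsub>G\<^esub> (n * a) \<otimes>\<^bsub>G\<^esub> (x [^]\<^bsub>G\<^esub> r) [^]\<^bsub>G\<^esub> b"
      using x tor by simp
    also have "\<dots> = x [^]\<^bsub>G\<^esub> (n * a + r * b)"
      using x by (simp add: G.int_pow_pow G.int_pow_mult)
    also have "n * a + r * b = 1" using ab by (simp add: mult.commute)
    finally show ?thesis using x by simp
  qed
  then show ?thesis using retract_direct_summand[OF G H P \<psi>] by blast
qed




lemma star_get:
  assumes "star_arrow G H" "r \<noteq> 0"
  shows "\<exists>n::int. n \<noteq> 0 \<and> gcd n r = 1 \<and> mult_arrow n G H"
proof -
  have "\<forall>r::int. r \<noteq> 0 \<longrightarrow> (\<exists>n::int. n \<noteq> 0 \<and> gcd n r = 1 \<and> mult_arrow n G H)"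
    using assms(1) unfolding star_arrow_def .
  then have "r \<noteq> 0 \<longrightarrow> (\<exists>n::int. n \<noteq> 0 \<and> gcd n r = 1 \<and> mult_arrow n G H)" by (rule spec)
  then show ?thesis using assms(2) by (rule mp)
qed

lemma tor_card:
  assumes fG: "fgdec G kG yG" and fH: "fgdec H kH yH" and st: "star_arrow G H"
  shows "\<exists>\<phi>. \<phi> \<in> hom G H \<and> inj_on \<phi> (fgdec.TG G kG yG) \<and> \<phi> ` fgdec.TG G kG yG \<subseteq> fgdec.TG H kH yH"
proof -
  interpret G: fgdec G kG yG by fact
  interpret H: fgdec H kH yH by fact
  have "G.E * H.E \<noteq> 0" using G.Epos H.Epos by simp
  from star_get[OF st this] obtain n :: int where h: "n \<noteq> 0 \<and> gcd n (G.E * H.E) = 1 \<and> mult_arrow n G H" ..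
  from h have n1: "gcd n (G.E * H.E) = 1" by (elim conjE)
  from h have n2: "mult_arrow n G H" by (elim conjE)
  have "coprime n (G.E * H.E)" using n1 by (simp add: coprime_iff_gcd_eq_1)
  then have "coprime n G.E" by simp
  then have "gcd n G.E = 1" by (simp add: coprime_iff_gcd_eq_1)
  then show ?thesis by (rule tor_map[OF fG fH n2])
qed

lemma tor_iso:
  assumes fG: "fgdec G kG yG" and fH: "fgdec H kH yH" and st1: "star_arrow G H" and st2: "star_arrow H G"
  shows "subgroup_generated G (fgdec.TG G kG yG) \<cong> subgroup_generated H (fgdec.TG H kH yH)"
proof -
  interpret G: fgdec G kG yG by fact
  interpret H: fgdec H kH yH by fact
  obtain \<phi> where \<phi>: "\<phi> \<in> hom G H" and inj: "inj_on \<phi> G.TG" and img: "\<phi> ` G.TG \<subseteq> H.TG"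
    using tor_card[OF fG fH st1] by blast
  obtain \<phi>' where inj': "inj_on \<phi>' H.TG" and img': "\<phi>' ` H.TG \<subseteq> G.TG"
    using tor_card[OF fH fG st2] by blast
  have c1: "card G.TG \<le> card H.TG" using card_inj_on_le[OF inj img H.TG_fin] .
  have c2: "card H.TG \<le> card G.TG" using card_inj_on_le[OF inj' img' G.TG_fin] .
  have "card (\<phi> ` G.TG) = card H.TG" using c1 c2 card_image[OF inj] by simp
  then have im: "\<phi> ` G.TG = H.TG" using card_subset_eq[OF H.TG_fin img] by simp
  have cG: "carrier (subgroup_generated G G.TG) = G.TG"
    using subgroup.carrier_subgroup_generated_subgroup[OF G.TG_sub] .
  have cH: "carrier (subgroup_generated H H.TG) = H.TG"
    using subgroup.carrier_subgroup_generated_subgroup[OF H.TG_sub] .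
  have "\<phi> \<in> hom (subgroup_generated G G.TG) (subgroup_generated H H.TG)"
  proof (rule homI)
    fix x assume "x \<in> carrier (subgroup_generated G G.TG)"
    then show "\<phi> x \<in> carrier (subgroup_generated H H.TG)" using im cG cH by auto
  next
    fix x y assume "x \<in> carrier (subgroup_generated G G.TG)" "y \<in> carrier (subgroup_generated G G.TG)"
    then have "x \<in> carrier G" "y \<in> carrier G" using cG G.TG_sub subgroup.subset by blast+
    then show "\<phi> (x \<otimes>\<^bsub>subgroup_generated G G.TG\<^esub> y) = \<phi> x \<otimes>\<^bsub>subgroup_generated H H.TG\<^esub> \<phi> y"
      using \<phi> by (simp add: hom_mult)
  qed
  moreover have "bij_betw \<phi> (carrier (subgroup_generated G G.TG)) (carrier (subgroup_generated H H.TG))"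
    unfolding cG cH bij_betw_def using inj im by simp
  ultimately have "\<phi> \<in> iso (subgroup_generated G G.TG) (subgroup_generated H H.TG)"
    unfolding iso_def by simp
  then show ?thesis by (rule is_isoI)
qed

lemma rank_le:
  assumes fG: "fgdec G kG yG" and fH: "fgdec H kH yH" and st: "star_arrow G H"
  shows "fgdec.rk G kG yG \<le> fgdec.rk H kH yH"
proof -
  interpret G: fgdec G kG yG by fact
  interpret H: fgdec H kH yH by fact
  obtain n where n: "n \<noteq> 0" "mult_arrow n G H" using star_get[OF st, of 1] by auto
  have "rank0_le G H" by (rule partA[OF G.comm_group_axioms H.comm_group_axioms n])
  then obtain B f where B: "Z_independent H B" and f: "inj_on f (yG ` G.FI)" "f ` (yG ` G.FI) \<subseteq> B"
    using G.yFI_indep unfolding rank0_le_def by blast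
  have "card (f ` (yG ` G.FI)) \<le> H.rk"
    by (rule H.rank_bound[OF B f(2)]) (use G.finFI in simp)
  moreover have "card (f ` (yG ` G.FI)) = G.rk" using card_image[OF f(1)] G.card_yFI by simp
  ultimately show ?thesis by simp
qed

lemma partD_fg:
  assumes fG: "fgdec G kG yG" and fH: "fgdec H kH yH" and st1: "star_arrow G H" and st2: "star_arrow H G"
  shows "G \<cong> H"
proof -
  interpret G: fgdec G kG yG by fact
  interpret H: fgdec H kH yH by fact
  have rk: "G.rk = H.rk" using rank_le[OF fG fH st1] rank_le[OF fH fG st2] by simp
  have Z: "G.Zr = H.Zr" unfolding G.Zr_def H.Zr_def rk ..
  have gZ: "group G.Zr" unfolding G.Zr_def by simp
  have fiso: "subgroup_generated G G.FG \<cong> subgroup_generated H H.FG"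
    using group.iso_sym[OF gZ G.iso_free] H.iso_free Z by (metis iso_trans)
  have tiso: "subgroup_generated G G.TG \<cong> subgroup_generated H H.TG" by (rule tor_iso[OF fG fH st1 st2])
  have gT: "group (subgroup_generated G G.TG)" by simp
  have gTF: "group (subgroup_generated G G.TG \<times>\<times> subgroup_generated G G.FG)"
    by (simp add: DirProd_group)
  have "G \<cong> subgroup_generated G G.TG \<times>\<times> subgroup_generated G G.FG"
    by (rule group.iso_sym[OF gTF G.iso_TF])
  also have "\<dots> \<cong> subgroup_generated H H.TG \<times>\<times> subgroup_generated H H.FG"
    by (rule group.DirProd_iso_trans[OF gT tiso fiso])
  also have "\<dots> \<cong> H" by (rule H.iso_TF)
  finally show ?thesis .
qed


lemma partB':
  assumes G: "comm_group G" and H: "comm_group H"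
    and h0: "\<exists>m n::int. m \<noteq> 0 \<and> n \<noteq> 0 \<and> gcd m n = 1 \<and> mult_arrow m G H \<and> mult_arrow n G H"
  shows "direct_summand G (H \<times>\<times> H)"
proof -
  from h0 obtain m :: int where "\<exists>n::int. m \<noteq> 0 \<and> n \<noteq> 0 \<and> gcd m n = 1 \<and> mult_arrow m G H \<and> mult_arrow n G H" ..
  then obtain n :: int where h: "m \<noteq> 0 \<and> n \<noteq> 0 \<and> gcd m n = 1 \<and> mult_arrow m G H \<and> mult_arrow n G H" ..
  show ?thesis
    by (rule partB[OF G H h[THEN conjunct2, THEN conjunct2, THEN conjunct1]
          h[THEN conjunct2, THEN conjunct2, THEN conjunct2, THEN conjunct1]
          h[THEN conjunct2, THEN conjunct2, THEN conjunct2, THEN conjunct2]])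
qed

lemma fin_gen_transfer':
  assumes G: "comm_group G" and H: "comm_group H" and fH: "fin_gen H"
    and h0: "\<exists>m n::int. m \<noteq> 0 \<and> n \<noteq> 0 \<and> gcd m n = 1 \<and> mult_arrow m G H \<and> mult_arrow n G H"
  shows "fin_gen G"
proof -
  from h0 obtain m :: int where "\<exists>n::int. m \<noteq> 0 \<and> n \<noteq> 0 \<and> gcd m n = 1 \<and> mult_arrow m G H \<and> mult_arrow n G H" ..
  then obtain n :: int where h: "m \<noteq> 0 \<and> n \<noteq> 0 \<and> gcd m n = 1 \<and> mult_arrow m G H \<and> mult_arrow n G H" ..
  show ?thesis
    by (rule fin_gen_transfer[OF G H fH h[THEN conjunct2, THEN conjunct2, THEN conjunct1]
          h[THEN conjunct2, THEN conjunct2, THEN conjunct2, THEN conjunct1]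
          h[THEN conjunct2, THEN conjunct2, THEN conjunct2, THEN conjunct2]])
qed

theorem lemma3p14:
  fixes G :: "('a, 'c) monoid_scheme" and H :: "('b, 'd) monoid_scheme"
  assumes "comm_group G" and "comm_group H"
  shows "((\<exists>n::int. n \<noteq> 0 \<and> mult_arrow n G H) \<longrightarrow> rank0_le G H)
    \<and> ((\<exists>m n::int. m \<noteq> 0 \<and> n \<noteq> 0 \<and> gcd m n = 1 \<and> mult_arrow m G H \<and> mult_arrow n G H)
         \<longrightarrow> direct_summand G (H \<times>\<times> H))
    \<and> (star_arrow G H \<longrightarrow> direct_summand G (H \<times>\<times> H))
    \<and> ((\<exists>n r::int. n \<noteq> 0 \<and> r \<noteq> 0 \<and> gcd n r = 1 \<and> mult_arrow n G H
          \<and> (\<forall>x \<in> carrier G. x [^]\<^bsub>G\<^esub> r = \<one>\<^bsub>G\<^esub>))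
         \<longrightarrow> direct_summand G H)
    \<and> ((fin_gen G \<or> fin_gen H) \<and> star_arrow G H \<and> star_arrow H G \<longrightarrow> G \<cong> H)"
proof (intro conjI impI)
  show "rank0_le G H" if "\<exists>n::int. n \<noteq> 0 \<and> mult_arrow n G H"
  proof -
    from that obtain n :: int where h: "n \<noteq> 0 \<and> mult_arrow n G H" ..
    show ?thesis by (rule partA[OF assms h[THEN conjunct1] h[THEN conjunct2]])
  qed
  show "direct_summand G (H \<times>\<times> H)"
    if "\<exists>m n::int. m \<noteq> 0 \<and> n \<noteq> 0 \<and> gcd m n = 1 \<and> mult_arrow m G H \<and> mult_arrow n G H"
    by (rule partB'[OF assms that])
  show "direct_summand G (H \<times>\<times> H)" if "star_arrow G H"
    by (rule partB'[OF assms star_two[OF that]])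
  show "direct_summand G H"
    if "\<exists>n r::int. n \<noteq> 0 \<and> r \<noteq> 0 \<and> gcd n r = 1 \<and> mult_arrow n G H
          \<and> (\<forall>x \<in> carrier G. x [^]\<^bsub>G\<^esub> r = \<one>\<^bsub>G\<^esub>)"
  proof -
    from that obtain n :: int where "\<exists>r::int. n \<noteq> 0 \<and> r \<noteq> 0 \<and> gcd n r = 1 \<and> mult_arrow n G H
          \<and> (\<forall>x \<in> carrier G. x [^]\<^bsub>G\<^esub> r = \<one>\<^bsub>G\<^esub>)" ..
    then obtain r :: int where h: "n \<noteq> 0 \<and> r \<noteq> 0 \<and> gcd n r = 1 \<and> mult_arrow n G H
          \<and> (\<forall>x \<in> carrier G. x [^]\<^bsub>G\<^esub> r = \<one>\<^bsub>G\<^esub>)" ..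
    show ?thesis
      by (rule partC[OF assms h[THEN conjunct2, THEN conjunct2, THEN conjunct1]
            h[THEN conjunct2, THEN conjunct2, THEN conjunct2, THEN conjunct1]
            h[THEN conjunct2, THEN conjunct2, THEN conjunct2, THEN conjunct2]])
  qed
  show "G \<cong> H" if h: "(fin_gen G \<or> fin_gen H) \<and> star_arrow G H \<and> star_arrow H G"
  proof -
    have st1: "star_arrow G H" and st2: "star_arrow H G" using h by auto
    have fg: "fin_gen G \<and> fin_gen H"
    proof (cases "fin_gen H")
      case True
      have "fin_gen G" by (rule fin_gen_transfer'[OF assms True star_two[OF st1]])
      then show ?thesis using True by simp
    next
      case False
      then have fG: "fin_gen G" using h by simp
      have "fin_gen H" by (rule fin_gen_transfer'[OF assms(2,1) fG star_two[OF st2]])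
      then show ?thesis using fG by simp
    qed
    obtain kG yG where dG: "fgdec G kG yG" using fgdec_exists[OF assms(1)] fg by blast
    obtain kH yH where dH: "fgdec H kH yH" using fgdec_exists[OF assms(2)] fg by blast
    show ?thesis by (rule partD_fg[OF dG dH st1 st2])
  qed
qed


end
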